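(* Let $P\in\mathcal E_0$ be such that $\mathbb E_P[\epsilon_P\xi_P\mid Z]$ is not almost surely equal to $0$. Assume the weight functions $\hat w^{(n)}$ are estimated on a data set $\mathbf A$ independent of $(\mathbf X^{(n)},\mathbf Y^{(n)},\mathbf Z^{(n)})$, that $\hat f,\hat g$ are estimated on an auxiliary data set independent of both $(\mathbf X^{(n)},\mathbf Y^{(n)},\mathbf Z^{(n)})$ and $\mathbf A$, and that there exists $C>0$ with $|\hat w^{(n)}(z)|\le C$ for all $n,z$. Assume $A_fA_g=o_P(n^{-1})$, $B_f=o_P(1)$, $B_g=o_P(1)$, that there exists $\eta>0$ with $\mathbb E_P[|\epsilon_P\xi_P|^{2+\eta}]<\infty$, and that $P$-almost surely there exists $c>0$ with $\inf_n\operatorname{Var}_P(\epsilon_P\xi_P\hat w^{(n)}(Z)\mid\mathbf A)\ge c$. Assume moreover that $\hat w^{(n)}(z)\to w(z)=\operatorname{sign}(\mathbb E_P[\epsilon_P\xi_P\mid Z=z])$ pointwise for almost all $z\in\mathbb R^{d_Z}$ with $\mathbb E_P[\epsilon_P\xi_P\mid Z=z]\ne0$. Then for all $M>0$, $\mathbb P_P(T^{(n)}\ge M)\to1$.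
   Context: Let $X,Y$ be real-valued random variables and $Z$ a random vector in $\mathbb R^{d_Z}$. $\mathcal E_0$ is the set of distributions of $(X,Y,Z)$ absolutely continuous with respect to Lebesgue measure. For $P\in\mathcal E_0$: $f_P(z)=\mathbb E_P[X\mid Z=z]$, $g_P(z)=\mathbb E_P[Y\mid Z=z]$, $\epsilon_P=X-f_P(Z)$, $\xi_P=Y-g_P(Z)$, $u_P(z)=\mathbb E_P[\epsilon_P^2\mid Z=z]$, $v_P(z)=\mathbb E_P[\xi_P^2\mid Z=z]$. Data $(x_i,y_i,z_i)$, $i=1,\dots,n$, i.i.d. copies of $(X,Y,Z)$ form $(\mathbf X^{(n)},\mathbf Y^{(n)},\mathbf Z^{(n)})$; $\hat f,\hat g$ estimate $f_P,g_P$. $A_f=\frac1n\sum_i(f_P(z_i)-\hat f(z_i))^2$, $A_g=\frac1n\sum_i(g_P(z_i)-\hat g(z_i))^2$, $B_f=\frac1n\sum_i(f_P(z_i)-\hat f(z_i))^2v_P(z_i)$, $B_g=\frac1n\sum_i(g_P(z_i)-\hat g(z_i))^2u_P(z_i)$. With $R_i^{(n)}=(x_i-\hat f(z_i))(y_i-\hat g(z_i))\hat w^{(n)}(z_i)$, $T^{(n)}=\frac{\frac1{\sqrt n}\sum_iR_i^{(n)}}{\big(\frac1n\sum_i(R_i^{(n)})^2-(\frac1n\sum_rR_r^{(n)})^2\big)^{1/2}}$. $V_n=o_P(W_n)$ means $\mathbb P_P(|V_n/W_n|>\delta)\to0$ for all $\delta>0$. *)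

theory Defs
  imports "HOL-Probability.Probability"
begin

text \<open>A version g of z \<mapsto> E_P[h | Zf = z]: a Borel function with g(Zf x) equal to the
  conditional expectation of h given the sigma-algebra generated by Zf, P-almost surely.\<close>
definition is_cond_exp_fun ::
  "'a measure \<Rightarrow> ('a \<Rightarrow> 'z::euclidean_space) \<Rightarrow> ('a \<Rightarrow> real) \<Rightarrow> ('z \<Rightarrow> real) \<Rightarrow> bool" where
  "is_cond_exp_fun P Zf h g \<longleftrightarrow> g \<in> borel_measurable borel \<and>
     (AE x in P. g (Zf x) = real_cond_exp P (vimage_algebra (space P) Zf borel) h x)"

text \<open>Same for a nonnegative integrand (no integrability needed), with a real-valued version.\<close>
definition is_nn_cond_exp_fun ::
  "'a measure \<Rightarrow> ('a \<Rightarrow> 'z::euclidean_space) \<Rightarrow> ('a \<Rightarrow> real) \<Rightarrow> ('z \<Rightarrow> real) \<Rightarrow> bool" where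
  "is_nn_cond_exp_fun P Zf h g \<longleftrightarrow> g \<in> borel_measurable borel \<and>
     (AE x in P. 0 \<le> g (Zf x) \<and>
        ennreal (g (Zf x)) = nn_cond_exp P (vimage_algebra (space P) Zf borel) (\<lambda>x. ennreal (h x)) x)"

definition o_P :: "'w measure \<Rightarrow> (nat \<Rightarrow> 'w \<Rightarrow> real) \<Rightarrow> (nat \<Rightarrow> 'w \<Rightarrow> real) \<Rightarrow> bool" where
  "o_P Q V W \<longleftrightarrow>
     (\<forall>\<delta>>0. (\<lambda>n. measure Q {\<omega> \<in> space Q. \<bar>V n \<omega> / W n \<omega>\<bar> > \<delta>}) \<longlonglongrightarrow> 0)"

definition Tstat :: "nat \<Rightarrow> (nat \<Rightarrow> real) \<Rightarrow> real" where
  "Tstat n R = ((1 / sqrt (real n)) * (\<Sum>i<n. R i)) /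
     sqrt ((\<Sum>i<n. (R i)\<^sup>2) / real n - ((\<Sum>r<n. R r) / real n)\<^sup>2)"

end

theory Submission
  imports Defs
begin

lemma indep_prod_distr:
  assumes M: "prob_space M" and X[measurable]: "X \<in> measurable M S" and Y[measurable]: "Y \<in> measurable M T"
  and rect: "\<And>a b. a \<in> sets S \<Longrightarrow> b \<in> sets T \<Longrightarrow>
     measure M (X -` a \<inter> Y -` b \<inter> space M) = measure M (X -` a \<inter> space M) * measure M (Y -` b \<inter> space M)"
  shows "distr M S X \<Otimes>\<^sub>M distr M T Y = distr M (S \<Otimes>\<^sub>M T) (\<lambda>\<omega>. (X \<omega>, Y \<omega>))"
proof -
  interpret M: prob_space M by (rule M)
  interpret PX: prob_space "distr M S X" by (rule M.prob_space_distr) simp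
  interpret PY: prob_space "distr M T Y" by (rule M.prob_space_distr) simp
  show ?thesis
  proof (rule pair_measure_eqI)
    show "sigma_finite_measure (distr M S X)" "sigma_finite_measure (distr M T Y)"
      by unfold_locales
    show "sets (distr M S X \<Otimes>\<^sub>M distr M T Y) = sets (distr M (S \<Otimes>\<^sub>M T) (\<lambda>\<omega>. (X \<omega>, Y \<omega>)))"
      by simp
    fix a b assume ab: "a \<in> sets (distr M S X)" "b \<in> sets (distr M T Y)"
    then have ab': "a \<in> sets S" "b \<in> sets T" by auto
    have "(\<lambda>\<omega>. (X \<omega>, Y \<omega>)) -` (a \<times> b) \<inter> space M = X -` a \<inter> Y -` b \<inter> space M" by auto
    moreover have "X -` a \<inter> Y -` b \<inter> space M \<in> sets M" using ab' by measurable
    ultimately show "emeasure (distr M S X) a * emeasure (distr M T Y) b =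
      emeasure (distr M (S \<Otimes>\<^sub>M T) (\<lambda>\<omega>. (X \<omega>, Y \<omega>))) (a \<times> b)"
      using ab' rect[OF ab'] by (simp add: emeasure_distr M.emeasure_eq_measure ennreal_mult'' measure_nonneg)
  qed
qed

lemma indep_prod_nn_integral:
  assumes M: "prob_space M" and X[measurable]: "X \<in> measurable M S" and Y[measurable]: "Y \<in> measurable M T"
  and rect: "\<And>a b. a \<in> sets S \<Longrightarrow> b \<in> sets T \<Longrightarrow>
     measure M (X -` a \<inter> Y -` b \<inter> space M) = measure M (X -` a \<inter> space M) * measure M (Y -` b \<inter> space M)"
  and f[measurable]: "f \<in> borel_measurable (S \<Otimes>\<^sub>M T)"
  shows "(\<integral>\<^sup>+\<omega>. f (X \<omega>, Y \<omega>) \<partial>M) = (\<integral>\<^sup>+y. (\<integral>\<^sup>+\<omega>. f (X \<omega>, y) \<partial>M) \<partial>distr M T Y)"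
proof -
  interpret M: prob_space M by (rule M)
  interpret PX: prob_space "distr M S X" by (rule M.prob_space_distr) simp
  interpret PY: prob_space "distr M T Y" by (rule M.prob_space_distr) simp
  interpret PXY: pair_sigma_finite "distr M S X" "distr M T Y" by unfold_locales
  have "(\<integral>\<^sup>+\<omega>. f (X \<omega>, Y \<omega>) \<partial>M) = (\<integral>\<^sup>+p. f p \<partial>distr M (S \<Otimes>\<^sub>M T) (\<lambda>\<omega>. (X \<omega>, Y \<omega>)))"
    by (subst nn_integral_distr) auto
  also have "\<dots> = (\<integral>\<^sup>+p. f p \<partial>(distr M S X \<Otimes>\<^sub>M distr M T Y))"
    by (subst indep_prod_distr[OF M X Y rect]) auto
  also have "\<dots> = (\<integral>\<^sup>+y. (\<integral>\<^sup>+x. f (x, y) \<partial>distr M S X) \<partial>distr M T Y)"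
    by (subst PXY.nn_integral_snd[symmetric]) auto
  also have "\<dots> = (\<integral>\<^sup>+y. (\<integral>\<^sup>+\<omega>. f (X \<omega>, y) \<partial>M) \<partial>distr M T Y)"
  proof (rule nn_integral_cong)
    fix y assume "y \<in> space (distr M T Y)"
    then have y: "y \<in> space T" by simp
    have [measurable]: "(\<lambda>x. f (x, y)) \<in> borel_measurable S"
      using y by measurable
    show "(\<integral>\<^sup>+x. f (x, y) \<partial>distr M S X) = (\<integral>\<^sup>+\<omega>. f (X \<omega>, y) \<partial>M)"
      by (subst nn_integral_distr) auto
  qed
  finally show ?thesis .
qed

locale L =
  fixes Q :: "'w measure"
    and P :: "(real \<times> real \<times> 'z::euclidean_space) measure"
    and X Y :: "nat \<Rightarrow> 'w \<Rightarrow> real" and Z :: "nat \<Rightarrow> 'w \<Rightarrow> 'z"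
    and SA :: "'a measure" and A :: "'w \<Rightarrow> 'a"
    and SB :: "'b measure" and B :: "'w \<Rightarrow> 'b"
    and what :: "nat \<Rightarrow> 'a \<Rightarrow> 'z \<Rightarrow> real"
    and fhat ghat :: "nat \<Rightarrow> 'b \<Rightarrow> 'z \<Rightarrow> real"
    and fP gP uP vP hP :: "'z \<Rightarrow> real"
  assumes Q: "prob_space Q"
    and D_meas: "\<And>i. (\<lambda>\<omega>. (X i \<omega>, Y i \<omega>, Z i \<omega>)) \<in> borel_measurable Q"
    and D_iid: "prob_space.indep_vars Q (\<lambda>_. borel) (\<lambda>i \<omega>. (X i \<omega>, Y i \<omega>, Z i \<omega>)) UNIV"
    and D_distr: "\<And>i. distr Q borel (\<lambda>\<omega>. (X i \<omega>, Y i \<omega>, Z i \<omega>)) = P"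
    and P_E0: "absolutely_continuous lborel P"
    and intX: "integrable P (\<lambda>x. fst x)" and intY: "integrable P (\<lambda>x. fst (snd x))"
    and fP: "is_cond_exp_fun P (\<lambda>x. snd (snd x)) (\<lambda>x. fst x) fP"
    and gP: "is_cond_exp_fun P (\<lambda>x. snd (snd x)) (\<lambda>x. fst (snd x)) gP"
    and uP: "is_nn_cond_exp_fun P (\<lambda>x. snd (snd x)) (\<lambda>x. (fst x - fP (snd (snd x)))\<^sup>2) uP"
    and vP: "is_nn_cond_exp_fun P (\<lambda>x. snd (snd x)) (\<lambda>x. (fst (snd x) - gP (snd (snd x)))\<^sup>2) vP"
    and hP: "is_cond_exp_fun P (\<lambda>x. snd (snd x))
               (\<lambda>x. (fst x - fP (snd (snd x))) * (fst (snd x) - gP (snd (snd x)))) hP"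
    and h_nonzero: "\<not> (AE x in P. hP (snd (snd x)) = 0)"
    (* weights estimated on A, regression functions on an auxiliary data set B;
       data, A and B mutually independent *)
    and A_meas: "A \<in> measurable Q SA" and B_meas: "B \<in> measurable Q SB"
    and indep: "prob_space.indep_sets Q
       (\<lambda>k::nat. if k = 0 then sets (vimage_algebra (space Q)
                      (\<lambda>\<omega> i. (X i \<omega>, Y i \<omega>, Z i \<omega>)) (PiM UNIV (\<lambda>_. borel)))
                 else if k = 1 then sets (vimage_algebra (space Q) A SA)
                 else sets (vimage_algebra (space Q) B SB)) {0, 1, 2}"
    and what_meas: "\<And>n. case_prod (what n) \<in> borel_measurable (SA \<Otimes>\<^sub>M borel)"
    and fhat_meas: "\<And>n. case_prod (fhat n) \<in> borel_measurable (SB \<Otimes>\<^sub>M borel)"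
    and ghat_meas: "\<And>n. case_prod (ghat n) \<in> borel_measurable (SB \<Otimes>\<^sub>M borel)"
    and what_bdd: "\<exists>C>0. \<forall>n a z. \<bar>what n a z\<bar> \<le> C"
    and AfAg: "o_P Q
       (\<lambda>n \<omega>. ((\<Sum>i<n. (fP (Z i \<omega>) - fhat n (B \<omega>) (Z i \<omega>))\<^sup>2) / real n) *
               ((\<Sum>i<n. (gP (Z i \<omega>) - ghat n (B \<omega>) (Z i \<omega>))\<^sup>2) / real n))
       (\<lambda>n \<omega>. 1 / real n)"
    and Bf: "o_P Q (\<lambda>n \<omega>. (\<Sum>i<n. (fP (Z i \<omega>) - fhat n (B \<omega>) (Z i \<omega>))\<^sup>2 * vP (Z i \<omega>)) / real n)
                   (\<lambda>n \<omega>. 1)"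
    and Bg: "o_P Q (\<lambda>n \<omega>. (\<Sum>i<n. (gP (Z i \<omega>) - ghat n (B \<omega>) (Z i \<omega>))\<^sup>2 * uP (Z i \<omega>)) / real n)
                   (\<lambda>n \<omega>. 1)"
    and moment: "\<exists>\<eta>>0. (\<integral>\<^sup>+ x. ennreal (\<bar>(fst x - fP (snd (snd x))) * (fst (snd x) - gP (snd (snd x)))\<bar>
                                        powr (2 + \<eta>)) \<partial>P) < \<infinity>"
    (* conditional variance given A, bounded below uniformly in n *)
    and var_lb: "AE \<omega> in Q. \<exists>c>0. \<forall>n. c \<le> prob_space.variance P
                   (\<lambda>x. (fst x - fP (snd (snd x))) * (fst (snd x) - gP (snd (snd x)))
                        * what n (A \<omega>) (snd (snd x)))"
    and what_lim: "AE \<omega> in Q. AE z in lborel. hP z \<noteq> 0 \<longrightarrow>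
                   (\<lambda>n. what n (A \<omega>) z) \<longlonglongrightarrow> sgn (hP z)"

begin

definition zc :: "real \<times> real \<times> 'z \<Rightarrow> 'z" where "zc x = snd (snd x)"
definition eps :: "real \<times> real \<times> 'z \<Rightarrow> real" where "eps x = fst x - fP (zc x)"
definition xi :: "real \<times> real \<times> 'z \<Rightarrow> real" where "xi x = fst (snd x) - gP (zc x)"
definition D :: "nat \<Rightarrow> 'w \<Rightarrow> real \<times> real \<times> 'z" where "D i \<omega> = (X i \<omega>, Y i \<omega>, Z i \<omega>)"
definition Dseq :: "'w \<Rightarrow> nat \<Rightarrow> real \<times> real \<times> 'z" where "Dseq \<omega> = (\<lambda>i. D i \<omega>)"
definition AB :: "'w \<Rightarrow> 'a \<times> 'b" where "AB \<omega> = (A \<omega>, B \<omega>)"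
definition muAB where "muAB = distr Q (SA \<Otimes>\<^sub>M SB) AB"
definition PD where "PD = PiM UNIV (\<lambda>_::nat. (borel :: (real \<times> real \<times> 'z) measure))"

lemma Qp: "prob_space Q" by (rule Q)

lemma zc_meas[measurable]: "zc \<in> borel_measurable borel"
  unfolding zc_def by (intro borel_measurable_continuous_onI continuous_intros)

lemma fP_meas[measurable]: "fP \<in> borel_measurable borel" using fP by (simp add: is_cond_exp_fun_def)
lemma gP_meas[measurable]: "gP \<in> borel_measurable borel" using gP by (simp add: is_cond_exp_fun_def)
lemma hP_meas[measurable]: "hP \<in> borel_measurable borel" using hP by (simp add: is_cond_exp_fun_def)
lemma uP_meas[measurable]: "uP \<in> borel_measurable borel" using uP by (simp add: is_nn_cond_exp_fun_def)
lemma vP_meas[measurable]: "vP \<in> borel_measurable borel" using vP by (simp add: is_nn_cond_exp_fun_def)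

lemma fst_meas[measurable]: "(\<lambda>x::real \<times> real \<times> 'z. fst x) \<in> borel_measurable borel"
  by (intro borel_measurable_continuous_onI continuous_intros)
lemma fsnd_meas[measurable]: "(\<lambda>x::real \<times> real \<times> 'z. fst (snd x)) \<in> borel_measurable borel"
  by (intro borel_measurable_continuous_onI continuous_intros)
lemma eps_meas[measurable]: "eps \<in> borel_measurable borel" unfolding eps_def by measurable
lemma xi_meas[measurable]: "xi \<in> borel_measurable borel" unfolding xi_def by measurable

lemma D_meas'[measurable]: "D i \<in> borel_measurable Q"
  using D_meas[of i] unfolding D_def by simp

lemma Dseq_meas[measurable]: "Dseq \<in> measurable Q PD"
  unfolding PD_def Dseq_def by (rule measurable_PiM_single') (auto)

lemma AB_meas[measurable]: "AB \<in> measurable Q (SA \<Otimes>\<^sub>M SB)"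
  unfolding AB_def using A_meas B_meas by measurable

lemma distr_D: "distr Q borel (D i) = P"
  using D_distr[of i] unfolding D_def by simp

lemma sets_P[measurable_cong]: "sets P = sets borel"
  using distr_D[of 0] by (metis sets_distr)

lemma space_P: "space P = UNIV"
  using distr_D[of 0] by (metis space_distr space_borel)

lemma Pp: "prob_space P"
  using distr_D[of 0] Q by (metis prob_space.prob_space_distr D_meas')

lemma indep_DAB: "\<And>a b. a \<in> sets PD \<Longrightarrow> b \<in> sets (SA \<Otimes>\<^sub>M SB) \<Longrightarrow>
     measure Q (Dseq -` a \<inter> AB -` b \<inter> space Q) = measure Q (Dseq -` a \<inter> space Q) * measure Q (AB -` b \<inter> space Q)"
proof -
  interpret Q: prob_space Q by (rule Q)
  define E where "E = (\<lambda>k::nat. if k = 0 then sets (vimage_algebra (space Q)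
                      (\<lambda>\<omega> i. (X i \<omega>, Y i \<omega>, Z i \<omega>)) (PiM UNIV (\<lambda>_. borel)))
                 else if k = 1 then sets (vimage_algebra (space Q) A SA)
                 else sets (vimage_algebra (space Q) B SB))"
  define I where "I = (\<lambda>j::nat. if j = 0 then {0::nat} else {1,2})"
  have "(\<Union>j\<in>{0,1}. I j) = {0,1,2}" by (auto simp: I_def)
  then have ind: "Q.indep_sets E (\<Union>j\<in>{0,1}. I j)" using indep unfolding E_def by simp
  have ist: "Int_stable (E i)" for i
    unfolding E_def by (auto intro!: Int_stableI)
  have dj: "disjoint_family_on I {0,1}" by (auto simp: disjoint_family_on_def I_def)
  have ind2: "Q.indep_sets (\<lambda>j. sigma_sets (space Q) (\<Union>i\<in>I j. E i)) {0,1}"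
    by (rule Q.indep_sets_collect_sigma[OF ind ist dj])
  define G0 where "G0 = sigma_sets (space Q) (E 0)"
  define G1 where "G1 = sigma_sets (space Q) (E 1 \<union> E 2)"
  have G0eq: "sigma_sets (space Q) (\<Union>i\<in>I 0. E i) = G0" by (simp add: I_def G0_def)
  have G1eq: "sigma_sets (space Q) (\<Union>i\<in>I 1. E i) = G1" by (simp add: I_def G1_def Un_commute)
  have indG: "Q.indep_set G0 G1"
    unfolding Q.indep_sets2_eq
  proof (intro conjI ballI)
    show "G0 \<subseteq> Q.events" using ind2 G0eq unfolding Q.indep_sets_def by auto
    show "G1 \<subseteq> Q.events" using ind2 G1eq unfolding Q.indep_sets_def by force
    fix a b assume ab: "a \<in> G0" "b \<in> G1"
    have "Q.prob (\<Inter>j\<in>{0,1::nat}. (\<lambda>j. if j = 0 then a else b) j) = (\<Prod>j\<in>{0,1::nat}. Q.prob ((\<lambda>j. if j = 0 then a else b) j))"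
    proof (rule Q.indep_setsD[OF ind2])
      show "\<forall>j\<in>{0, 1}. (if j = 0 then a else b) \<in> sigma_sets (space Q) (\<Union>i\<in>I j. E i)"
        using ab G0eq G1eq by (auto simp del: Sigma_Algebra.sigma_sets_UNION)
    qed auto
    then show "Q.prob (a \<inter> b) = Q.prob a * Q.prob b" by (simp add: Int_commute)
  qed
  have sub0: "sigma_sets (space Q) {Dseq -` S \<inter> space Q |S. S \<in> sets PD} \<subseteq> G0"
  proof -
    have "{Dseq -` S \<inter> space Q |S. S \<in> sets PD} \<subseteq> E 0"
      unfolding E_def PD_def Dseq_def D_def by (auto intro: in_vimage_algebra)
    then show ?thesis unfolding G0_def by (rule sigma_sets_mono')
  qed
  have sub1: "sigma_sets (space Q) {AB -` S \<inter> space Q |S. S \<in> sets (SA \<Otimes>\<^sub>M SB)} \<subseteq> G1"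
  proof -
    have EP: "E 1 \<union> E 2 \<subseteq> Pow (space Q)"
    proof -
      have "E 1 \<subseteq> Pow (space Q)" unfolding E_def using sets.sets_into_space[of _ "vimage_algebra (space Q) A SA"] by simp blast
      moreover have "E 2 \<subseteq> Pow (space Q)" unfolding E_def using sets.sets_into_space[of _ "vimage_algebra (space Q) B SB"] by simp blast
      ultimately show ?thesis by blast
    qed
    define N where "N = sigma (space Q) (E 1 \<union> E 2)"
    have spN: "space N = space Q" unfolding N_def using EP by simp
    have sN: "sets N = G1" unfolding N_def G1_def using EP by simp
    have "A \<in> measurable N SA"
      unfolding measurable_def spN
    proof safe
      show "A x \<in> space SA" if "x \<in> space Q" for x using A_meas that by (auto dest: measurable_space)
      fix s assume "s \<in> sets SA"
      then have "A -` s \<inter> space Q \<in> E 1" unfolding E_def by (auto intro: in_vimage_algebra)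
      then show "A -` s \<inter> space Q \<in> sets N" unfolding sN G1_def by auto
    qed
    moreover have "B \<in> measurable N SB"
      unfolding measurable_def spN
    proof safe
      show "B x \<in> space SB" if "x \<in> space Q" for x using B_meas that by (auto dest: measurable_space)
      fix s assume "s \<in> sets SB"
      then have "B -` s \<inter> space Q \<in> E 2" unfolding E_def by (auto intro: in_vimage_algebra)
      then show "B -` s \<inter> space Q \<in> sets N" unfolding sN G1_def by auto
    qed
    ultimately have "AB \<in> measurable N (SA \<Otimes>\<^sub>M SB)" unfolding AB_def by (rule measurable_Pair)
    then have "{AB -` S \<inter> space Q |S. S \<in> sets (SA \<Otimes>\<^sub>M SB)} \<subseteq> sets N"
      using measurable_sets[of AB N] spN by auto
    then have "sigma_sets (space N) {AB -` S \<inter> space Q |S. S \<in> sets (SA \<Otimes>\<^sub>M SB)} \<subseteq> sets N"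
      by (rule sets.sigma_sets_subset)
    then show ?thesis using sN spN by simp
  qed
  fix a b assume "a \<in> sets PD" "b \<in> sets (SA \<Otimes>\<^sub>M SB)"
  then have "Dseq -` a \<inter> space Q \<in> G0" "AB -` b \<inter> space Q \<in> G1"
    using sub0 sub1 by blast+
  with indG have "measure Q ((Dseq -` a \<inter> space Q) \<inter> (AB -` b \<inter> space Q)) = measure Q (Dseq -` a \<inter> space Q) * measure Q (AB -` b \<inter> space Q)"
    unfolding Q.indep_sets2_eq by blast
  moreover have "(Dseq -` a \<inter> space Q) \<inter> (AB -` b \<inter> space Q) = Dseq -` a \<inter> AB -` b \<inter> space Q" by blast
  ultimately show "measure Q (Dseq -` a \<inter> AB -` b \<inter> space Q) = measure Q (Dseq -` a \<inter> space Q) * measure Q (AB -` b \<inter> space Q)"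
    by simp
qed

end


context L
begin

definition FZ where "FZ = vimage_algebra (space P) zc borel"

lemma FZ_sub: "sigma_finite_subalgebra P FZ"
proof -
  interpret P: prob_space P by (rule Pp)
  have "finite_measure_subalgebra P FZ"
    unfolding finite_measure_subalgebra_def finite_measure_subalgebra_axioms_def subalgebra_def
  proof (intro conjI)
    show "finite_measure P" by unfold_locales
    show "space FZ = space P" unfolding FZ_def by simp
    show "sets FZ \<subseteq> sets P" unfolding FZ_def
      by (rule sets_image_in_sets) (auto simp: space_P measurable_cong_sets[OF sets_P refl])
  qed
  then show ?thesis by (rule finite_measure_subalgebra_is_sigma_finite)
qed

lemma zc_FZ: "zc \<in> measurable FZ borel"
  unfolding FZ_def by (rule measurable_vimage_algebra1) simp

lemma comp_FZ: "\<phi> \<in> borel_measurable borel \<Longrightarrow> (\<lambda>x. \<phi> (zc x)) \<in> borel_measurable FZ"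
  by (rule measurable_compose[OF zc_FZ])

lemma meas_P: "f \<in> borel_measurable borel \<Longrightarrow> f \<in> borel_measurable P"
  by (simp add: measurable_cong_sets[OF sets_P refl])

lemma cond_eps2:
  assumes phi[measurable]: "(\<phi> :: 'z \<Rightarrow> ennreal) \<in> borel_measurable borel"
  shows "(\<integral>\<^sup>+x. ennreal ((eps x)\<^sup>2) * \<phi> (zc x) \<partial>P) = (\<integral>\<^sup>+x. ennreal (uP (zc x)) * \<phi> (zc x) \<partial>P)"
proof -
  interpret S: sigma_finite_subalgebra P FZ by (rule FZ_sub)
  have ae: "AE x in P. ennreal (uP (zc x)) = nn_cond_exp P FZ (\<lambda>x. ennreal ((eps x)\<^sup>2)) x"
    using uP unfolding is_nn_cond_exp_fun_def FZ_def eps_def zc_def by auto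
  have "(\<integral>\<^sup>+x. ennreal ((eps x)\<^sup>2) * \<phi> (zc x) \<partial>P) = (\<integral>\<^sup>+x. \<phi> (zc x) * ennreal ((eps x)\<^sup>2) \<partial>P)"
    by (simp add: mult.commute)
  also have "\<dots> = (\<integral>\<^sup>+x. \<phi> (zc x) * nn_cond_exp P FZ (\<lambda>x. ennreal ((eps x)\<^sup>2)) x \<partial>P)"
    by (rule S.nn_cond_exp_intg[symmetric]) (auto intro: comp_FZ meas_P)
  also have "\<dots> = (\<integral>\<^sup>+x. ennreal (uP (zc x)) * \<phi> (zc x) \<partial>P)"
    using ae by (intro nn_integral_cong_AE) (auto simp: mult.commute)
  finally show ?thesis .
qed

lemma cond_xi2:
  assumes phi[measurable]: "(\<phi> :: 'z \<Rightarrow> ennreal) \<in> borel_measurable borel"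
  shows "(\<integral>\<^sup>+x. ennreal ((xi x)\<^sup>2) * \<phi> (zc x) \<partial>P) = (\<integral>\<^sup>+x. ennreal (vP (zc x)) * \<phi> (zc x) \<partial>P)"
proof -
  interpret S: sigma_finite_subalgebra P FZ by (rule FZ_sub)
  have ae: "AE x in P. ennreal (vP (zc x)) = nn_cond_exp P FZ (\<lambda>x. ennreal ((xi x)\<^sup>2)) x"
    using vP unfolding is_nn_cond_exp_fun_def FZ_def xi_def zc_def by auto
  have "(\<integral>\<^sup>+x. ennreal ((xi x)\<^sup>2) * \<phi> (zc x) \<partial>P) = (\<integral>\<^sup>+x. \<phi> (zc x) * ennreal ((xi x)\<^sup>2) \<partial>P)"
    by (simp add: mult.commute)
  also have "\<dots> = (\<integral>\<^sup>+x. \<phi> (zc x) * nn_cond_exp P FZ (\<lambda>x. ennreal ((xi x)\<^sup>2)) x \<partial>P)"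
    by (rule S.nn_cond_exp_intg[symmetric]) (auto intro: comp_FZ meas_P)
  also have "\<dots> = (\<integral>\<^sup>+x. ennreal (vP (zc x)) * \<phi> (zc x) \<partial>P)"
    using ae by (intro nn_integral_cong_AE) (auto simp: mult.commute)
  finally show ?thesis .
qed

lemma pow_le: assumes "(\<eta>::real) > 0" shows "\<bar>t\<bar>\<^sup>2 \<le> 1 + \<bar>t\<bar> powr (2 + \<eta>)"
proof (cases "\<bar>t\<bar> \<le> 1")
  case True
  then have "\<bar>t\<bar>\<^sup>2 \<le> 1" by (simp add: abs_square_le_1)
  then show ?thesis by (smt (verit) powr_ge_zero)
next
  case False
  then have "\<bar>t\<bar>\<^sup>2 = \<bar>t\<bar> powr 2" by (simp add: powr_numeral)
  also have "\<dots> \<le> \<bar>t\<bar> powr (2 + \<eta>)" using False assms by (intro powr_mono) auto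
  finally show ?thesis by simp
qed

lemma e2_int: "integrable P (\<lambda>x. (eps x * xi x)\<^sup>2)"
proof -
  interpret P: prob_space P by (rule Pp)
  obtain \<eta> where eta: "\<eta> > 0" and fin: "(\<integral>\<^sup>+ x. ennreal (\<bar>eps x * xi x\<bar> powr (2 + \<eta>)) \<partial>P) < \<infinity>"
    using moment unfolding eps_def xi_def zc_def by auto
  have "(\<integral>\<^sup>+ x. ennreal (norm ((eps x * xi x)\<^sup>2)) \<partial>P) \<le> (\<integral>\<^sup>+ x. (1 + ennreal (\<bar>eps x * xi x\<bar> powr (2 + \<eta>))) \<partial>P)"
  proof (intro nn_integral_mono)
    fix x
    have "ennreal (norm ((eps x * xi x)\<^sup>2)) \<le> ennreal (1 + \<bar>eps x * xi x\<bar> powr (2 + \<eta>))"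
      using pow_le[OF eta, of "eps x * xi x"] by (intro ennreal_leI) simp
    then show "ennreal (norm ((eps x * xi x)\<^sup>2)) \<le> 1 + ennreal (\<bar>eps x * xi x\<bar> powr (2 + \<eta>))"
      by (simp add: ennreal_plus)
  qed
  also have "\<dots> = (\<integral>\<^sup>+ x. 1 \<partial>P) + (\<integral>\<^sup>+ x. ennreal (\<bar>eps x * xi x\<bar> powr (2 + \<eta>)) \<partial>P)"
    by (rule nn_integral_add) (auto intro!: meas_P)
  also have "\<dots> < \<infinity>" using fin by (simp add: P.emeasure_space_1)
  finally show ?thesis by (intro integrableI_bounded) (auto intro!: meas_P)
qed

lemma e_int: "integrable P (\<lambda>x. eps x * xi x)"
proof -
  interpret P: prob_space P by (rule Pp)
  have m: "(\<lambda>x. eps x * xi x) \<in> borel_measurable P" by (intro meas_P) measurable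
  show ?thesis by (rule P.square_integrable_imp_integrable[OF m e2_int])
qed

lemma cond_e:
  assumes w[measurable]: "w \<in> borel_measurable borel" and C: "\<And>z. \<bar>w z\<bar> \<le> C"
  shows "integrable P (\<lambda>x. w (zc x) * (eps x * xi x))"
    "(\<integral>x. w (zc x) * (eps x * xi x) \<partial>P) = (\<integral>x. w (zc x) * hP (zc x) \<partial>P)"
proof -
  interpret S: sigma_finite_subalgebra P FZ by (rule FZ_sub)
  show int: "integrable P (\<lambda>x. w (zc x) * (eps x * xi x))"
  proof (rule Bochner_Integration.integrable_bound)
    show "integrable P (\<lambda>x. C * (eps x * xi x))" using e_int by simp
    show "(\<lambda>x. w (zc x) * (eps x * xi x)) \<in> borel_measurable P" by (intro meas_P) measurable
    show "AE x in P. norm (w (zc x) * (eps x * xi x)) \<le> norm (C * (eps x * xi x))"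
    proof (intro AE_I2)
      fix x
      have "\<bar>w (zc x)\<bar> \<le> \<bar>C\<bar>" using C[of "zc x"] by linarith
      then show "norm (w (zc x) * (eps x * xi x)) \<le> norm (C * (eps x * xi x))"
        unfolding real_norm_def abs_mult[of "w _"] abs_mult[of C] by (intro mult_right_mono) auto
    qed
  qed
  have ae: "AE x in P. hP (zc x) = real_cond_exp P FZ (\<lambda>x. eps x * xi x) x"
    using hP unfolding is_cond_exp_fun_def FZ_def eps_def xi_def zc_def by auto
  have "(\<integral>x. w (zc x) * (eps x * xi x) \<partial>P) = (\<integral>x. w (zc x) * real_cond_exp P FZ (\<lambda>x. eps x * xi x) x \<partial>P)"
    by (rule S.real_cond_exp_intg(2)[symmetric]) (auto intro: comp_FZ meas_P int)
  also have "\<dots> = (\<integral>x. w (zc x) * hP (zc x) \<partial>P)"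
    using ae by (intro integral_cong_AE) (auto intro!: meas_P)
  finally show "(\<integral>x. w (zc x) * (eps x * xi x) \<partial>P) = (\<integral>x. w (zc x) * hP (zc x) \<partial>P)" .
qed

end

context L
begin

definition PR :: "nat \<Rightarrow> (nat \<Rightarrow> real \<times> real \<times> 'z) measure" where
  "PR i = PiM (UNIV - {i}) (\<lambda>_. borel)"
definition Rest where "Rest i \<omega> = restrict (\<lambda>j. D j \<omega>) (UNIV - {i})"

lemma Rest_meas[measurable]: "Rest i \<in> measurable Q (PR i)"
  unfolding Rest_def PR_def by (rule measurable_restrict) simp

lemma D_iid': "prob_space.indep_vars Q (\<lambda>_. borel) D UNIV"
proof -
  have "D = (\<lambda>i \<omega>. (X i \<omega>, Y i \<omega>, Z i \<omega>))" by (simp add: D_def fun_eq_iff)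
  then show ?thesis using D_iid by simp
qed

lemma indep_i:
  assumes a: "a \<in> sets borel" and b: "b \<in> sets (PR i)"
  shows "measure Q (D i -` a \<inter> Rest i -` b \<inter> space Q) = measure Q (D i -` a \<inter> space Q) * measure Q (Rest i -` b \<inter> space Q)"
proof -
  interpret Q: prob_space Q by (rule Q)
  have iv: "Q.indep_var (PiM {i} (\<lambda>_. borel)) (\<lambda>\<omega>. restrict (\<lambda>j. D j \<omega>) {i}) (PR i) (Rest i)"
    unfolding PR_def Rest_def by (rule Q.indep_var_restrict[OF D_iid']) auto
  define Xa where "Xa = (\<lambda>f. f i) -` a \<inter> space (PiM {i} (\<lambda>_. borel :: (real \<times> real \<times> 'z) measure))"
  have Xa: "Xa \<in> sets (PiM {i} (\<lambda>_. borel))"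
  proof -
    have "(\<lambda>f. f i) \<in> measurable (PiM {i} (\<lambda>_. borel :: (real \<times> real \<times> 'z) measure)) borel"
      by (rule measurable_component_singleton) simp
    then show ?thesis unfolding Xa_def using a by (rule measurable_sets)
  qed
  have sp: "restrict (\<lambda>j. D j \<omega>) {i} \<in> space (PiM {i} (\<lambda>_. borel :: (real \<times> real \<times> 'z) measure))" for \<omega>
    by (simp add: space_PiM)
  have e1: "(\<lambda>x. (restrict (\<lambda>j. D j x) {i}, Rest i x)) -` (Xa \<times> b) \<inter> space Q = D i -` a \<inter> Rest i -` b \<inter> space Q"
    using sp by (auto simp: Xa_def)
  have e2: "(\<lambda>\<omega>. restrict (\<lambda>j. D j \<omega>) {i}) -` Xa \<inter> space Q = D i -` a \<inter> space Q"
    using sp by (auto simp: Xa_def)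
  show ?thesis using Q.indep_varD[OF iv Xa b] e1 e2 by simp
qed

lemma upd_meas[measurable]: "(\<lambda>z. \<lambda>j. if j = i then z else c j) \<in> measurable (borel :: 'z measure) (PiM UNIV (\<lambda>_::nat. borel :: 'z measure))"
  by (rule measurable_PiM_single') auto

lemma upd_meas2: "(\<lambda>p. \<lambda>j. if j = i then zc (fst p) else zc (snd p j)) \<in> measurable (borel \<Otimes>\<^sub>M PR i) (PiM UNIV (\<lambda>_::nat. borel :: 'z measure))"
proof (rule measurable_PiM_single')
  fix j :: nat
  show "(\<lambda>p. (\<lambda>j. if j = i then zc (fst p) else zc (snd p j)) j) \<in> borel_measurable (borel \<Otimes>\<^sub>M PR i)"
  proof (cases "j = i")
    case True then show ?thesis by simp
  next
    case False
    have "(\<lambda>p. snd p j) \<in> measurable (borel \<Otimes>\<^sub>M PR i) borel"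
    proof -
      have "(\<lambda>x. x j) \<in> measurable (PR i) borel" unfolding PR_def using False
        by (intro measurable_component_singleton) auto
      then show ?thesis by (rule measurable_compose[OF measurable_snd])
    qed
    then have "(\<lambda>p. zc (snd p j)) \<in> borel_measurable (borel \<Otimes>\<^sub>M PR i)"
      by (rule measurable_compose) (rule zc_meas)
    then show ?thesis using False by simp
  qed
qed auto

lemma swap_lemma:
  assumes g1[measurable]: "(g1 :: real \<times> real \<times> 'z \<Rightarrow> ennreal) \<in> borel_measurable borel"
    and g2[measurable]: "(g2 :: real \<times> real \<times> 'z \<Rightarrow> ennreal) \<in> borel_measurable borel"
    and H: "\<And>\<phi>. (\<phi> :: 'z \<Rightarrow> ennreal) \<in> borel_measurable borel \<Longrightarrow> (\<integral>\<^sup>+x. g1 x * \<phi> (zc x) \<partial>P) = (\<integral>\<^sup>+x. g2 x * \<phi> (zc x) \<partial>P)"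
    and Psi[measurable]: "\<Psi> \<in> borel_measurable (PiM UNIV (\<lambda>_::nat. borel :: 'z measure))"
  shows "(\<integral>\<^sup>+\<omega>. g1 (D i \<omega>) * \<Psi> (\<lambda>j. zc (D j \<omega>)) \<partial>Q) = (\<integral>\<^sup>+\<omega>. g2 (D i \<omega>) * \<Psi> (\<lambda>j. zc (D j \<omega>)) \<partial>Q)"
proof -
  have gen: "(\<integral>\<^sup>+\<omega>. g (D i \<omega>) * \<Psi> (\<lambda>j. zc (D j \<omega>)) \<partial>Q) =
     (\<integral>\<^sup>+r. (\<integral>\<^sup>+x. g x * \<Psi> (\<lambda>j. if j = i then zc x else zc (r j)) \<partial>P) \<partial>distr Q (PR i) (Rest i))"
    if g[measurable]: "(g :: real \<times> real \<times> 'z \<Rightarrow> ennreal) \<in> borel_measurable borel" for g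
  proof -
    define Fg where "Fg = (\<lambda>p. g (fst p) * \<Psi> (\<lambda>j. if j = i then zc (fst p) else zc (snd p j)))"
    have Fm: "Fg \<in> borel_measurable (borel \<Otimes>\<^sub>M PR i)"
      unfolding Fg_def using upd_meas2[of i] by measurable
    have "(\<integral>\<^sup>+\<omega>. g (D i \<omega>) * \<Psi> (\<lambda>j. zc (D j \<omega>)) \<partial>Q) = (\<integral>\<^sup>+\<omega>. Fg (D i \<omega>, Rest i \<omega>) \<partial>Q)"
    proof (rule nn_integral_cong)
      fix \<omega>
      have "(\<lambda>j. if j = i then zc (D i \<omega>) else zc (Rest i \<omega> j)) = (\<lambda>j. zc (D j \<omega>))"
        by (auto simp: Rest_def)
      then show "g (D i \<omega>) * \<Psi> (\<lambda>j. zc (D j \<omega>)) = Fg (D i \<omega>, Rest i \<omega>)"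
        unfolding Fg_def fst_conv snd_conv by simp
    qed
    also have "\<dots> = (\<integral>\<^sup>+r. (\<integral>\<^sup>+\<omega>. Fg (D i \<omega>, r) \<partial>Q) \<partial>distr Q (PR i) (Rest i))"
      by (rule indep_prod_nn_integral[OF Q D_meas' Rest_meas indep_i Fm])
    also have "\<dots> = (\<integral>\<^sup>+r. (\<integral>\<^sup>+x. g x * \<Psi> (\<lambda>j. if j = i then zc x else zc (r j)) \<partial>P) \<partial>distr Q (PR i) (Rest i))"
    proof (rule nn_integral_cong)
      fix r assume r: "r \<in> space (distr Q (PR i) (Rest i))"
      have [measurable]: "(\<lambda>x. Fg (x, r)) \<in> borel_measurable borel"
        using Fm r by (intro measurable_Pair_compose_split[of "\<lambda>x y. Fg (x, y)" borel "PR i"]) auto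
      have "(\<integral>\<^sup>+\<omega>. Fg (D i \<omega>, r) \<partial>Q) = (\<integral>\<^sup>+x. Fg (x, r) \<partial>distr Q borel (D i))"
        by (subst nn_integral_distr) auto
      also have "\<dots> = (\<integral>\<^sup>+x. Fg (x, r) \<partial>P)" by (simp add: distr_D)
      also have "\<dots> = (\<integral>\<^sup>+x. g x * \<Psi> (\<lambda>j. if j = i then zc x else zc (r j)) \<partial>P)"
        unfolding Fg_def fst_conv snd_conv ..
      finally show "(\<integral>\<^sup>+\<omega>. Fg (D i \<omega>, r) \<partial>Q) = (\<integral>\<^sup>+x. g x * \<Psi> (\<lambda>j. if j = i then zc x else zc (r j)) \<partial>P)" .
    qed
    finally show ?thesis .
  qed
  show ?thesis
    unfolding gen[OF g1] gen[OF g2]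
  proof (rule nn_integral_cong)
    fix r
    have m: "(\<lambda>z. \<Psi> (\<lambda>j. if j = i then z else zc (r j))) \<in> borel_measurable borel"
      by measurable
    show "(\<integral>\<^sup>+x. g1 x * \<Psi> (\<lambda>j. if j = i then zc x else zc (r j)) \<partial>P) = (\<integral>\<^sup>+x. g2 x * \<Psi> (\<lambda>j. if j = i then zc x else zc (r j)) \<partial>P)"
      using H[OF m] by simp
  qed
qed

lemma cond_AB:
  assumes f[measurable]: "f \<in> borel_measurable (PD \<Otimes>\<^sub>M (SA \<Otimes>\<^sub>M SB))"
  shows "(\<integral>\<^sup>+\<omega>. f (Dseq \<omega>, AB \<omega>) \<partial>Q) = (\<integral>\<^sup>+ab. (\<integral>\<^sup>+\<omega>. f (Dseq \<omega>, ab) \<partial>Q) \<partial>muAB)"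
  unfolding muAB_def by (rule indep_prod_nn_integral[OF Q Dseq_meas AB_meas indep_DAB f])

end

lemma mean_abs_le:
  fixes a :: "nat \<Rightarrow> real"
  assumes n: "n > 0"
  shows "\<bar>(\<Sum>i<n. a i)\<bar> / n \<le> sqrt ((\<Sum>i<n. (a i)\<^sup>2) / n)"
proof (rule real_le_rsqrt)
  have "(\<Sum>i<n. a i)\<^sup>2 \<le> (\<Sum>i<n. (a i)\<^sup>2) * real n"
    using sum_squared_le_sum_of_squares[of a "{..<n}"] by simp
  then have "(\<Sum>i<n. a i)\<^sup>2 / (real n)\<^sup>2 \<le> (\<Sum>i<n. (a i)\<^sup>2) * real n / (real n)\<^sup>2"
    by (intro divide_right_mono) auto
  also have "\<dots> = (\<Sum>i<n. (a i)\<^sup>2) / n" using n by (simp add: power2_eq_square)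
  finally show "(\<bar>(\<Sum>i<n. a i)\<bar> / n)\<^sup>2 \<le> (\<Sum>i<n. (a i)\<^sup>2) / n"
    by (simp add: power_divide)
qed

lemma term_bound:
  fixes w q :: "nat \<Rightarrow> real"
  assumes n: "n > 0" and C: "\<And>i. \<bar>w i\<bar> \<le> C"
  shows "\<bar>(\<Sum>i<n. w i * q i) / n\<bar> \<le> C * sqrt ((\<Sum>i<n. (q i)\<^sup>2) / n)"
proof -
  have C0: "C \<ge> 0" using C[of 0] by linarith
  have "\<bar>(\<Sum>i<n. w i * q i) / n\<bar> = \<bar>(\<Sum>i<n. w i * q i)\<bar> / n" by simp
  also have "\<dots> \<le> sqrt ((\<Sum>i<n. (w i * q i)\<^sup>2) / n)" by (rule mean_abs_le[OF n])
  also have "\<dots> \<le> sqrt ((\<Sum>i<n. C\<^sup>2 * (q i)\<^sup>2) / n)"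
  proof -
    have "(w i * q i)\<^sup>2 \<le> C\<^sup>2 * (q i)\<^sup>2" for i
    proof -
      have "(w i)\<^sup>2 \<le> C\<^sup>2" using power_mono[OF C[of i] abs_ge_zero, of 2] by simp
      then show ?thesis by (simp add: power_mult_distrib mult_right_mono)
    qed
    then show ?thesis by (intro real_sqrt_le_mono divide_right_mono sum_mono) auto
  qed
  also have "\<dots> = sqrt (C\<^sup>2 * ((\<Sum>i<n. (q i)\<^sup>2) / n))"
    by (subst sum_distrib_left[symmetric]) (simp only: times_divide_eq_right)
  also have "\<dots> = C * sqrt ((\<Sum>i<n. (q i)\<^sup>2) / n)"
    by (simp only: real_sqrt_mult real_sqrt_abs abs_of_nonneg[OF C0])
  finally show ?thesis .
qed

lemma sum_prod_le:
  fixes a b :: "nat \<Rightarrow> real"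
  assumes "\<And>i. a i \<ge> 0" "\<And>i. b i \<ge> 0"
  shows "(\<Sum>i<n. a i * b i) \<le> (\<Sum>i<n. a i) * (\<Sum>i<n. b i)"
proof -
  have "(\<Sum>i<n. a i) * (\<Sum>i<n. b i) = (\<Sum>i<n. \<Sum>j<n. a i * b j)"
    by (simp add: sum_product)
  also have "\<dots> \<ge> (\<Sum>i<n. a i * b i)"
    by (intro sum_mono member_le_sum) (auto intro: assms mult_nonneg_nonneg)
  finally show ?thesis .
qed

lemma sq_sum_le: "((a::real) + b)\<^sup>2 \<le> 2 * (a\<^sup>2 + b\<^sup>2)"
proof -
  have "0 \<le> (a - b)\<^sup>2" by simp
  then show ?thesis by (simp add: power2_eq_square algebra_simps)
qed

lemma R_sq_bound:
  fixes ep xx f g w C :: real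
  assumes "\<bar>w\<bar> \<le> C"
  shows "((ep + f) * (xx + g) * w)\<^sup>2 \<le> 4 * C\<^sup>2 * ((ep * xx)\<^sup>2 + ep\<^sup>2 * g\<^sup>2 + f\<^sup>2 * xx\<^sup>2 + f\<^sup>2 * g\<^sup>2)"
proof -
  have C0: "C \<ge> 0" using assms by linarith
  have w2: "w\<^sup>2 \<le> C\<^sup>2" using power_mono[OF assms abs_ge_zero, of 2] by simp
  have h1: "(ep + f)\<^sup>2 * (xx + g)\<^sup>2 \<le> (2 * (ep\<^sup>2 + f\<^sup>2)) * (2 * (xx\<^sup>2 + g\<^sup>2))"
    by (intro mult_mono sq_sum_le) auto
  have "((ep + f) * (xx + g) * w)\<^sup>2 = (ep + f)\<^sup>2 * (xx + g)\<^sup>2 * w\<^sup>2"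
    by (simp only: power_mult_distrib)
  also have "\<dots> \<le> (2 * (ep\<^sup>2 + f\<^sup>2)) * (2 * (xx\<^sup>2 + g\<^sup>2)) * C\<^sup>2"
    using h1 w2 by (rule mult_mono) auto
  also have "\<dots> = 4 * C\<^sup>2 * ((ep * xx)\<^sup>2 + ep\<^sup>2 * g\<^sup>2 + f\<^sup>2 * xx\<^sup>2 + f\<^sup>2 * g\<^sup>2)"
    by algebra
  finally show ?thesis .
qed

lemma det_lemma:
  fixes ep xx dF dG w R :: "nat \<Rightarrow> real"
  assumes n2: "2 \<le> n" and C: "C > 0" "\<And>i. \<bar>w i\<bar> \<le> C"
    and R: "\<And>i. R i = (ep i + dF i) * (xx i + dG i) * w i"
    and mu: "\<mu> > 0" and S0: "\<mu> \<le> (\<Sum>i<n. w i * (ep i * xx i)) / n"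
    and E1: "(\<Sum>i<n. (ep i * xx i)\<^sup>2) / n \<le> K1"
    and E2: "(\<Sum>i<n. (ep i)\<^sup>2 * (dG i)\<^sup>2) / n \<le> \<tau>"
    and E3: "(\<Sum>i<n. (dF i)\<^sup>2 * (xx i)\<^sup>2) / n \<le> \<tau>"
    and E4: "(\<Sum>i<n. (dF i)\<^sup>2) / n * ((\<Sum>i<n. (dG i)\<^sup>2) / n) * n \<le> \<tau>"
    and tau: "3 * C * sqrt \<tau> \<le> \<mu> / 2" "0 \<le> \<tau>"
    and R01: "\<not> (R 0 = R 1 \<and> R 0 \<noteq> 0)"
    and Mb: "M \<le> sqrt n * (\<mu> / 2) / sqrt (4 * C\<^sup>2 * (K1 + 3 * \<tau>))"
  shows "M \<le> Tstat n R"
proof -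
  have n0: "n > 0" "real n > 0" using n2 by auto
  define m where "m = (\<Sum>i<n. R i) / n"
  define S1 where "S1 = (\<Sum>i<n. w i * (ep i * dG i)) / n"
  define S2 where "S2 = (\<Sum>i<n. w i * (dF i * xx i)) / n"
  define S3 where "S3 = (\<Sum>i<n. w i * (dF i * dG i)) / n"
  have mdec: "m = (\<Sum>i<n. w i * (ep i * xx i)) / n + S1 + S2 + S3"
    unfolding m_def S1_def S2_def S3_def R
    by (simp add: add_divide_distrib[symmetric] sum.distrib[symmetric] algebra_simps)
  have b1: "\<bar>S1\<bar> \<le> C * sqrt \<tau>"
  proof -
    have "\<bar>S1\<bar> \<le> C * sqrt ((\<Sum>i<n. (ep i * dG i)\<^sup>2) / n)"
      unfolding S1_def by (rule term_bound[OF n0(1) C(2)])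
    also have "\<dots> \<le> C * sqrt \<tau>"
      using E2 C by (intro mult_left_mono real_sqrt_le_mono) (auto simp: power_mult_distrib)
    finally show ?thesis .
  qed
  have b2: "\<bar>S2\<bar> \<le> C * sqrt \<tau>"
  proof -
    have "\<bar>S2\<bar> \<le> C * sqrt ((\<Sum>i<n. (dF i * xx i)\<^sup>2) / n)"
      unfolding S2_def by (rule term_bound[OF n0(1) C(2)])
    also have "\<dots> \<le> C * sqrt \<tau>"
      using E3 C by (intro mult_left_mono real_sqrt_le_mono) (auto simp: power_mult_distrib)
    finally show ?thesis .
  qed
  have E4': "(\<Sum>i<n. (dF i)\<^sup>2 * (dG i)\<^sup>2) / n \<le> \<tau>"
  proof -
    have "(\<Sum>i<n. (dF i)\<^sup>2 * (dG i)\<^sup>2) / n \<le> (\<Sum>i<n. (dF i)\<^sup>2) * (\<Sum>i<n. (dG i)\<^sup>2) / n"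
      by (intro divide_right_mono sum_prod_le) auto
    also have "\<dots> = (\<Sum>i<n. (dF i)\<^sup>2) / n * ((\<Sum>i<n. (dG i)\<^sup>2) / n) * n"
      using n0 by (simp add: field_simps power2_eq_square)
    finally show ?thesis using E4 by linarith
  qed
  have b3: "\<bar>S3\<bar> \<le> C * sqrt \<tau>"
  proof -
    have "\<bar>S3\<bar> \<le> C * sqrt ((\<Sum>i<n. (dF i * dG i)\<^sup>2) / n)"
      unfolding S3_def by (rule term_bound[OF n0(1) C(2)])
    also have "\<dots> \<le> C * sqrt \<tau>"
      using E4' C by (intro mult_left_mono real_sqrt_le_mono) (auto simp: power_mult_distrib)
    finally show ?thesis .
  qed
  have mpos: "m \<ge> \<mu> / 2"
    using mdec S0 b1 b2 b3 tau by linarith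
  define V where "V = (\<Sum>i<n. (R i)\<^sup>2) / n - ((\<Sum>r<n. R r) / n)\<^sup>2"
  have Vdev: "V = (\<Sum>i<n. (R i - m)\<^sup>2) / n"
  proof -
    have "(\<Sum>i<n. (R i - m)\<^sup>2) = (\<Sum>i<n. (R i)\<^sup>2) - 2 * m * (\<Sum>i<n. R i) + n * m\<^sup>2"
      by (simp add: power2_diff sum.distrib sum_subtractf sum_distrib_left algebra_simps)
    also have "(\<Sum>i<n. R i) = n * m" unfolding m_def using n0 by simp
    finally show ?thesis unfolding V_def m_def[symmetric] using n0
      by (simp add: field_simps power2_eq_square)
  qed
  have Vpos: "V > 0"
  proof (rule ccontr)
    assume "\<not> V > 0"
    then have "(\<Sum>i<n. (R i - m)\<^sup>2) / n \<le> 0" unfolding Vdev by simp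
    then have "(\<Sum>i<n. (R i - m)\<^sup>2) \<le> 0" using n0
      by (auto simp add: divide_le_0_iff)
    then have "(\<Sum>i<n. (R i - m)\<^sup>2) = 0" by (meson sum_nonneg zero_le_power2 order.antisym)
    then have "\<forall>i\<in>{..<n}. (R i - m)\<^sup>2 = 0" by (subst (asm) sum_nonneg_eq_0_iff) auto
    then have "R 0 = m" "R 1 = m" using n2 by auto
    then show False using R01 mpos mu by auto
  qed
  have Vle: "V \<le> 4 * C\<^sup>2 * (K1 + 3 * \<tau>)"
  proof -
    have "V \<le> (\<Sum>i<n. (R i)\<^sup>2) / n" unfolding V_def by simp
    also have "\<dots> \<le> (\<Sum>i<n. 4 * C\<^sup>2 * ((ep i * xx i)\<^sup>2 + (ep i)\<^sup>2 * (dG i)\<^sup>2 + (dF i)\<^sup>2 * (xx i)\<^sup>2 + (dF i)\<^sup>2 * (dG i)\<^sup>2)) / n"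
      unfolding R by (intro divide_right_mono sum_mono R_sq_bound C) auto
    also have "\<dots> = 4 * C\<^sup>2 * ((\<Sum>i<n. (ep i * xx i)\<^sup>2) / n + (\<Sum>i<n. (ep i)\<^sup>2 * (dG i)\<^sup>2) / n
        + (\<Sum>i<n. (dF i)\<^sup>2 * (xx i)\<^sup>2) / n + (\<Sum>i<n. (dF i)\<^sup>2 * (dG i)\<^sup>2) / n)"
      using n0 by (simp add: sum_distrib_left[symmetric] sum.distrib field_simps)
    also have "\<dots> \<le> 4 * C\<^sup>2 * (K1 + \<tau> + \<tau> + \<tau>)"
      using E1 E2 E3 E4' by (intro mult_left_mono) auto
    finally show ?thesis by (simp add: ac_simps)
  qed
  have T: "Tstat n R = sqrt n * m / sqrt V"
  proof -
    have "(1 / sqrt n) * (\<Sum>i<n. R i) = sqrt n * m"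
      unfolding m_def using n0 by (simp add: field_simps)
    then show ?thesis unfolding Tstat_def V_def by simp
  qed
  have "sqrt n * (\<mu> / 2) / sqrt (4 * C\<^sup>2 * (K1 + 3 * \<tau>)) \<le> sqrt n * m / sqrt V"
  proof (rule frac_le)
    show "0 \<le> sqrt n * m" using mpos mu by simp
    show "sqrt n * (\<mu> / 2) \<le> sqrt n * m" using mpos by (intro mult_left_mono) auto
    show "0 < sqrt V" using Vpos by simp
    show "sqrt V \<le> sqrt (4 * C\<^sup>2 * (K1 + 3 * \<tau>))" using Vle by simp
  qed
  then show ?thesis using Mb T by linarith
qed


context L
begin

lemma A_meas'[measurable]: "A \<in> measurable Q SA" by (rule A_meas)
lemma B_meas'[measurable]: "B \<in> measurable Q SB" by (rule B_meas)

lemma what_m[measurable (raw)]: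
  "f \<in> measurable M SA \<Longrightarrow> g \<in> borel_measurable M \<Longrightarrow> (\<lambda>x. what n (f x) (g x)) \<in> borel_measurable M"
  by (rule measurable_Pair_compose_split[OF what_meas])
lemma fhat_m[measurable (raw)]:
  "f \<in> measurable M SB \<Longrightarrow> g \<in> borel_measurable M \<Longrightarrow> (\<lambda>x. fhat n (f x) (g x)) \<in> borel_measurable M"
  by (rule measurable_Pair_compose_split[OF fhat_meas])
lemma ghat_m[measurable (raw)]:
  "f \<in> measurable M SB \<Longrightarrow> g \<in> borel_measurable M \<Longrightarrow> (\<lambda>x. ghat n (f x) (g x)) \<in> borel_measurable M"
  by (rule measurable_Pair_compose_split[OF ghat_meas])

lemma PD_comp[measurable (raw)]: "f \<in> measurable M PD \<Longrightarrow> (\<lambda>x. f x i) \<in> borel_measurable M"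
  unfolding PD_def by (rule measurable_component_singleton'[where I=UNIV]) (auto intro: measurable_ident_sets)

lemma ZS_comp[measurable (raw)]: "f \<in> measurable M (PiM UNIV (\<lambda>_::nat. borel :: 'z measure)) \<Longrightarrow> (\<lambda>x. f x i) \<in> borel_measurable M"
  by (rule measurable_component_singleton'[where I=UNIV]) (auto intro: measurable_ident_sets)

lemma Dseq_D: "Dseq \<omega> i = D i \<omega>" by (simp add: Dseq_def)

lemma ZD_meas[measurable]: "(\<lambda>x j. zc (D j x)) \<in> measurable Q (PiM UNIV (\<lambda>_::nat. borel :: 'z measure))"
  by (rule measurable_PiM_single') auto

lemma trunc_generic:
  fixes q u :: "real \<times> real \<times> 'z \<Rightarrow> real" and \<delta> :: "nat \<Rightarrow> 'b \<Rightarrow> 'z \<Rightarrow> real"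
  assumes q[measurable]: "q \<in> borel_measurable borel" and u[measurable]: "u \<in> borel_measurable borel"
    and H: "\<And>\<phi>. (\<phi> :: 'z \<Rightarrow> ennreal) \<in> borel_measurable borel \<Longrightarrow>
        (\<integral>\<^sup>+x. ennreal ((q x)\<^sup>2) * \<phi> (zc x) \<partial>P) = (\<integral>\<^sup>+x. ennreal (u x) * \<phi> (zc x) \<partial>P)"
    and u0: "AE x in P. 0 \<le> u x"
    and dm: "(\<lambda>(b, z). \<delta> n b z) \<in> borel_measurable (SB \<Otimes>\<^sub>M borel)"
    and uz: "\<And>x. u x = u' (zc x)" and u'[measurable]: "u' \<in> borel_measurable borel"
    and n: "n > 0" and tau: "\<tau> > 0" and t: "t \<ge> 0"
  shows "emeasure Q {\<omega> \<in> space Q. \<tau> < (\<Sum>i<n. (q (D i \<omega>))\<^sup>2 * (\<delta> n (B \<omega>) (zc (D i \<omega>)))\<^sup>2) / n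
             \<and> (\<Sum>i<n. (\<delta> n (B \<omega>) (zc (D i \<omega>)))\<^sup>2 * u (D i \<omega>)) / n \<le> t} \<le> ennreal (t / \<tau>)"
proof -
  interpret Qp: prob_space Q by (rule Q)
  interpret MAB: prob_space muAB unfolding muAB_def by (rule Qp.prob_space_distr) simp
  have dm'[measurable]: "(\<lambda>x. \<delta> n (f x) (g x)) \<in> borel_measurable M"
    if "f \<in> measurable M SB" "g \<in> borel_measurable M" for f g and M :: "'c measure"
    by (rule measurable_Pair_compose_split[OF dm that])
  define E where "E = (\<lambda>b d. (\<Sum>i<n. (q (d i))\<^sup>2 * (\<delta> n b (zc (d i)))\<^sup>2) / n)"
  define BZ where "BZ = (\<lambda>b zs. (\<Sum>i<n. (\<delta> n b (zs i))\<^sup>2 * u' (zs i)) / n)"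
  define F where "F = (\<lambda>p :: (nat \<Rightarrow> real \<times> real \<times> 'z) \<times> ('a \<times> 'b).
      ennreal (E (snd (snd p)) (fst p)) * (if BZ (snd (snd p)) (\<lambda>j. zc (fst p j)) \<le> t then 1 else 0))"
  have Fm[measurable]: "F \<in> borel_measurable (PD \<Otimes>\<^sub>M (SA \<Otimes>\<^sub>M SB))"
    unfolding F_def E_def BZ_def by measurable
  define S where "S = {\<omega> \<in> space Q. \<tau> < (\<Sum>i<n. (q (D i \<omega>))\<^sup>2 * (\<delta> n (B \<omega>) (zc (D i \<omega>)))\<^sup>2) / n
             \<and> (\<Sum>i<n. (\<delta> n (B \<omega>) (zc (D i \<omega>)))\<^sup>2 * u (D i \<omega>)) / n \<le> t}"
  have Sm: "S \<in> sets Q" unfolding S_def by measurable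
  have "emeasure Q S = (\<integral>\<^sup>+\<omega>. indicator S \<omega> \<partial>Q)" using Sm by simp
  also have "\<dots> \<le> (\<integral>\<^sup>+\<omega>. ennreal (1 / \<tau>) * F (Dseq \<omega>, AB \<omega>) \<partial>Q)"
  proof (rule nn_integral_mono)
    fix \<omega> assume "\<omega> \<in> space Q"
    show "indicator S \<omega> \<le> ennreal (1 / \<tau>) * F (Dseq \<omega>, AB \<omega>)"
    proof (cases "\<omega> \<in> S")
      case True
      then have h1: "\<tau> < E (B \<omega>) (Dseq \<omega>)" and h2: "BZ (B \<omega>) (\<lambda>j. zc (Dseq \<omega> j)) \<le> t"
        unfolding S_def E_def BZ_def by (auto simp: Dseq_D uz)
      have "1 \<le> (1 / \<tau>) * E (B \<omega>) (Dseq \<omega>)" using h1 tau by (simp add: field_simps)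
      then have "ennreal 1 \<le> ennreal ((1 / \<tau>) * E (B \<omega>) (Dseq \<omega>))" by (rule ennreal_leI)
      then show ?thesis using True h2 tau unfolding F_def AB_def
        by (simp add: ennreal_mult[symmetric])
    qed simp
  qed
  also have "\<dots> = ennreal (1 / \<tau>) * (\<integral>\<^sup>+\<omega>. F (Dseq \<omega>, AB \<omega>) \<partial>Q)"
    by (rule nn_integral_cmult) simp
  also have "(\<integral>\<^sup>+\<omega>. F (Dseq \<omega>, AB \<omega>) \<partial>Q) = (\<integral>\<^sup>+ab. (\<integral>\<^sup>+\<omega>. F (Dseq \<omega>, ab) \<partial>Q) \<partial>muAB)"
    by (rule cond_AB[OF Fm])
  also have "\<dots> \<le> (\<integral>\<^sup>+ab. ennreal t \<partial>muAB)"
  proof (rule nn_integral_mono)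
    fix ab assume "ab \<in> space muAB"
    then have b: "snd ab \<in> space SB" by (auto simp: muAB_def space_pair_measure)
    define b' where "b' = snd ab"
    have b'[measurable]: "b' \<in> space SB" using b by (simp add: b'_def)
    define Psi where "Psi = (\<lambda>i zs. ennreal ((\<delta> n b' (zs i))\<^sup>2 / n) * (if BZ b' zs \<le> t then 1 else 0 :: ennreal))"
    have Psim[measurable]: "Psi i \<in> borel_measurable (PiM UNIV (\<lambda>_::nat. borel :: 'z measure))" for i
      unfolding Psi_def BZ_def by measurable
    have AEu: "AE \<omega> in Q. \<forall>i. 0 \<le> u (D i \<omega>)"
    proof (subst AE_all_countable, intro allI)
      fix i
      show "AE \<omega> in Q. 0 \<le> u (D i \<omega>)"
      proof -
        have "AE x in distr Q borel (D i). 0 \<le> u x" unfolding distr_D by (rule u0)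
        then show ?thesis by (rule AE_distrD[OF D_meas'])
      qed
    qed
    have "(\<integral>\<^sup>+\<omega>. F (Dseq \<omega>, ab) \<partial>Q) = (\<integral>\<^sup>+\<omega>. (\<Sum>i<n. ennreal ((q (D i \<omega>))\<^sup>2) * Psi i (\<lambda>j. zc (D j \<omega>))) \<partial>Q)"
    proof (rule nn_integral_cong)
      fix \<omega>
      have "ennreal (E b' (Dseq \<omega>)) = (\<Sum>i<n. ennreal ((q (D i \<omega>))\<^sup>2) * ennreal ((\<delta> n b' (zc (D i \<omega>)))\<^sup>2 / n))"
        unfolding E_def sum_divide_distrib
        by (subst sum_ennreal[symmetric]) (auto simp: ennreal_mult[symmetric] Dseq_D)
      then show "F (Dseq \<omega>, ab) = (\<Sum>i<n. ennreal ((q (D i \<omega>))\<^sup>2) * Psi i (\<lambda>j. zc (D j \<omega>)))"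
        unfolding F_def Psi_def b'_def by (simp add: sum_distrib_right Dseq_D mult.assoc)
    qed
    also have "\<dots> = (\<Sum>i<n. (\<integral>\<^sup>+\<omega>. ennreal ((q (D i \<omega>))\<^sup>2) * Psi i (\<lambda>j. zc (D j \<omega>)) \<partial>Q))"
      by (rule nn_integral_sum) measurable
    also have "\<dots> = (\<Sum>i<n. (\<integral>\<^sup>+\<omega>. ennreal (u (D i \<omega>)) * Psi i (\<lambda>j. zc (D j \<omega>)) \<partial>Q))"
    proof (rule sum.cong[OF refl])
      fix i
      show "(\<integral>\<^sup>+\<omega>. ennreal ((q (D i \<omega>))\<^sup>2) * Psi i (\<lambda>j. zc (D j \<omega>)) \<partial>Q) = (\<integral>\<^sup>+\<omega>. ennreal (u (D i \<omega>)) * Psi i (\<lambda>j. zc (D j \<omega>)) \<partial>Q)"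
        by (rule swap_lemma[of "\<lambda>x. ennreal ((q x)\<^sup>2)" "\<lambda>x. ennreal (u x)"]) (auto intro: H)
    qed
    also have "\<dots> = (\<integral>\<^sup>+\<omega>. (\<Sum>i<n. ennreal (u (D i \<omega>)) * Psi i (\<lambda>j. zc (D j \<omega>))) \<partial>Q)"
      by (rule nn_integral_sum[symmetric]) measurable
    also have "\<dots> = (\<integral>\<^sup>+\<omega>. ennreal (BZ b' (\<lambda>j. zc (D j \<omega>))) * (if BZ b' (\<lambda>j. zc (D j \<omega>)) \<le> t then 1 else 0) \<partial>Q)"
    proof (rule nn_integral_cong_AE)
      show "AE \<omega> in Q. (\<Sum>i<n. ennreal (u (D i \<omega>)) * Psi i (\<lambda>j. zc (D j \<omega>))) =
          ennreal (BZ b' (\<lambda>j. zc (D j \<omega>))) * (if BZ b' (\<lambda>j. zc (D j \<omega>)) \<le> t then 1 else 0)"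
        using AEu
      proof (eventually_elim)
        case (elim \<omega>)
        have "ennreal (BZ b' (\<lambda>j. zc (D j \<omega>))) = (\<Sum>i<n. ennreal (u (D i \<omega>)) * ennreal ((\<delta> n b' (zc (D i \<omega>)))\<^sup>2 / n))"
          unfolding BZ_def sum_divide_distrib
          using elim by (subst sum_ennreal[symmetric]) (auto simp: ennreal_mult[symmetric] uz mult.commute)
        then show ?case unfolding Psi_def by (simp add: sum_distrib_right mult.assoc)
      qed
    qed
    also have "\<dots> \<le> (\<integral>\<^sup>+\<omega>. ennreal t \<partial>Q)"
      by (rule nn_integral_mono) (auto intro: ennreal_leI)
    also have "\<dots> = ennreal t" by (simp add: Qp.emeasure_space_1)
    finally show "(\<integral>\<^sup>+\<omega>. F (Dseq \<omega>, ab) \<partial>Q) \<le> ennreal t" .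
  qed
  also have "\<dots> = ennreal t" by (simp add: MAB.emeasure_space_1)
  finally show ?thesis unfolding S_def using tau t
    by (simp add: ennreal_mult[symmetric] mult_left_mono)
qed

end

lemma (in prob_space) sum_sq_indep:
  fixes V :: "nat \<Rightarrow> 'a \<Rightarrow> real"
  assumes ind: "\<And>i j. i \<noteq> j \<Longrightarrow> indep_var borel (V i) borel (V j)"
    and int: "\<And>i. integrable M (\<lambda>x. (V i x)\<^sup>2)" and meas[measurable]: "\<And>i. V i \<in> borel_measurable M"
    and mean0: "\<And>i. expectation (V i) = 0"
    and K: "\<And>i. expectation (\<lambda>x. (V i x)\<^sup>2) \<le> K"
  shows "integrable M (\<lambda>x. (\<Sum>i<n. V i x)\<^sup>2)" "expectation (\<lambda>x. (\<Sum>i<n. V i x)\<^sup>2) \<le> n * K"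
proof -
  have int1: "integrable M (V i)" for i
    by (rule square_integrable_imp_integrable[OF meas int])
  have intij: "integrable M (\<lambda>x. V i x * V j x)" for i j
  proof (cases "i = j")
    case True then show ?thesis using int[of i] by (simp add: power2_eq_square)
  next
    case False then show ?thesis using ind[OF False] int1 by (intro indep_var_integrable) auto
  qed
  have eq: "(\<lambda>x. (\<Sum>i<n. V i x)\<^sup>2) = (\<lambda>x. \<Sum>i<n. \<Sum>j<n. V i x * V j x)"
    by (simp add: power2_eq_square sum_product)
  show "integrable M (\<lambda>x. (\<Sum>i<n. V i x)\<^sup>2)"
    unfolding eq by (intro Bochner_Integration.integrable_sum intij)
  have "expectation (\<lambda>x. (\<Sum>i<n. V i x)\<^sup>2) = (\<Sum>i<n. \<Sum>j<n. expectation (\<lambda>x. V i x * V j x))"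
    unfolding eq by (simp add: Bochner_Integration.integral_sum intij Bochner_Integration.integrable_sum)
  also have "\<dots> = (\<Sum>i<n. expectation (\<lambda>x. (V i x)\<^sup>2))"
  proof (rule sum.cong[OF refl])
    fix i assume i: "i \<in> {..<n}"
    have "(\<Sum>j<n. expectation (\<lambda>x. V i x * V j x)) = (\<Sum>j\<in>{i}. expectation (\<lambda>x. V i x * V j x))"
    proof (rule sum.mono_neutral_right)
      show "\<forall>j\<in>{..<n} - {i}. expectation (\<lambda>x. V i x * V j x) = 0"
      proof
        fix j assume "j \<in> {..<n} - {i}"
        then have "i \<noteq> j" by auto
        then show "expectation (\<lambda>x. V i x * V j x) = 0"
          using indep_var_lebesgue_integral[OF ind int1 int1] mean0 by simp
      qed
    qed (use i in auto)
    then show "(\<Sum>j<n. expectation (\<lambda>x. V i x * V j x)) = expectation (\<lambda>x. (V i x)\<^sup>2)"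
      by (simp add: power2_eq_square)
  qed
  also have "\<dots> \<le> (\<Sum>i<n. K)" by (intro sum_mono K)
  finally show "expectation (\<lambda>x. (\<Sum>i<n. V i x)\<^sup>2) \<le> n * K" by simp
qed

lemma (in prob_space) cheb_sum:
  fixes V :: "nat \<Rightarrow> 'a \<Rightarrow> real"
  assumes ind: "\<And>i j. i \<noteq> j \<Longrightarrow> indep_var borel (V i) borel (V j)"
    and int: "\<And>i. integrable M (\<lambda>x. (V i x)\<^sup>2)" and meas[measurable]: "\<And>i. V i \<in> borel_measurable M"
    and mean0: "\<And>i. expectation (V i) = 0"
    and K: "\<And>i. expectation (\<lambda>x. (V i x)\<^sup>2) \<le> K"
    and n: "n > 0" and r: "r > 0"
  shows "prob {x \<in> space M. r \<le> \<bar>(\<Sum>i<n. V i x) / n\<bar>} \<le> K / (n * r\<^sup>2)"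
proof -
  have "{x \<in> space M. r \<le> \<bar>(\<Sum>i<n. V i x) / n\<bar>} = {x \<in> space M. (n * r)\<^sup>2 \<le> (\<Sum>i<n. V i x)\<^sup>2}"
  proof -
    have "r \<le> \<bar>s / n\<bar> \<longleftrightarrow> (n * r)\<^sup>2 \<le> s\<^sup>2" for s :: real
    proof -
      have "r \<le> \<bar>s / n\<bar> \<longleftrightarrow> n * r \<le> \<bar>s\<bar>" using n by (simp add: field_simps)
      also have "\<dots> \<longleftrightarrow> (n * r)\<^sup>2 \<le> s\<^sup>2" using n r
        by (metis abs_le_square_iff abs_of_pos mult_pos_pos of_nat_0_less_iff)
      finally show ?thesis .
    qed
    then show ?thesis by auto
  qed
  also have "prob \<dots> \<le> expectation (\<lambda>x. (\<Sum>i<n. V i x)\<^sup>2) / (n * r)\<^sup>2"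
    using n r by (intro integral_Markov_inequality_measure[where A="space M"] sum_sq_indep(1)[OF ind int meas mean0 K]) auto
  also have "\<dots> \<le> (n * K) / (n * r)\<^sup>2"
    using n r by (intro divide_right_mono sum_sq_indep(2)[OF ind int meas mean0 K]) auto
  also have "\<dots> = K / (n * r\<^sup>2)" using n by (simp add: power2_eq_square field_simps)
  finally show ?thesis .
qed


context L
begin

definition Cw where "Cw = (SOME C. C > 0 \<and> (\<forall>n a z. \<bar>what n a z\<bar> \<le> C))"

lemma Cw: "Cw > 0" "\<And>n a z. \<bar>what n a z\<bar> \<le> Cw"
proof -
  have "\<exists>C. C > 0 \<and> (\<forall>n a z. \<bar>what n a z\<bar> \<le> C)" using what_bdd by auto
  then have "Cw > 0 \<and> (\<forall>n a z. \<bar>what n a z\<bar> \<le> Cw)" unfolding Cw_def by (rule someI_ex)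
  then show "Cw > 0" "\<And>n a z. \<bar>what n a z\<bar> \<le> Cw" by auto
qed

definition G where "G n a x = what n a (zc x) * (eps x * xi x)"
definition mm where "mm n a = (\<integral>x. G n a x \<partial>P)"
definition sig2 where "sig2 = (\<integral>x. (eps x * xi x)\<^sup>2 \<partial>P)"

lemma G_meas[measurable]: "a \<in> space SA \<Longrightarrow> G n a \<in> borel_measurable borel"
  unfolding G_def by measurable

lemma G_pair_meas: "(\<lambda>(a, x). G n a x) \<in> borel_measurable (SA \<Otimes>\<^sub>M borel)"
  unfolding G_def by measurable

lemma mm_meas[measurable]: "mm n \<in> borel_measurable SA"
proof -
  interpret P: prob_space P by (rule Pp)
  have "(\<lambda>(a, x). G n a x) \<in> borel_measurable (SA \<Otimes>\<^sub>M P)"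
    using G_pair_meas by (simp add: measurable_cong_sets[OF sets_pair_measure_cong[OF refl sets_P] refl])
  then show ?thesis unfolding mm_def by (rule P.borel_measurable_lebesgue_integral)
qed

lemma G_int: "a \<in> space SA \<Longrightarrow> integrable P (G n a)"
  unfolding G_def by (rule cond_e(1)) (auto intro: Cw)

lemma G2_int: assumes a: "a \<in> space SA" shows "integrable P (\<lambda>x. (G n a x)\<^sup>2)"
proof (rule Bochner_Integration.integrable_bound)
  show "integrable P (\<lambda>x. Cw\<^sup>2 * (eps x * xi x)\<^sup>2)" using e2_int by simp
  show "(\<lambda>x. (G n a x)\<^sup>2) \<in> borel_measurable P" using a by (intro meas_P) measurable
  show "AE x in P. norm ((G n a x)\<^sup>2) \<le> norm (Cw\<^sup>2 * (eps x * xi x)\<^sup>2)"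
  proof (intro AE_I2)
    fix x
    have "(what n a (zc x))\<^sup>2 \<le> Cw\<^sup>2" using power_mono[OF Cw(2)[of n a "zc x"] abs_ge_zero, of 2] by simp
    then show "norm ((G n a x)\<^sup>2) \<le> norm (Cw\<^sup>2 * (eps x * xi x)\<^sup>2)"
      unfolding G_def by (simp add: power_mult_distrib mult_right_mono)
  qed
qed

lemma G2_le: assumes a: "a \<in> space SA" shows "(\<integral>x. (G n a x)\<^sup>2 \<partial>P) \<le> Cw\<^sup>2 * sig2"
proof -
  have "(\<integral>x. (G n a x)\<^sup>2 \<partial>P) \<le> (\<integral>x. Cw\<^sup>2 * (eps x * xi x)\<^sup>2 \<partial>P)"
  proof (rule integral_mono)
    show "integrable P (\<lambda>x. (G n a x)\<^sup>2)" by (rule G2_int[OF a])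
    show "integrable P (\<lambda>x. Cw\<^sup>2 * (eps x * xi x)\<^sup>2)" using e2_int by simp
    fix x
    have "(what n a (zc x))\<^sup>2 \<le> Cw\<^sup>2" using power_mono[OF Cw(2)[of n a "zc x"] abs_ge_zero, of 2] by simp
    then show "(G n a x)\<^sup>2 \<le> Cw\<^sup>2 * (eps x * xi x)\<^sup>2"
      unfolding G_def by (simp add: power_mult_distrib mult_right_mono)
  qed
  then show ?thesis unfolding sig2_def by simp
qed

lemma indep_DD: assumes "i \<noteq> j" shows "prob_space.indep_var Q borel (D i) borel (D j)"
proof -
  interpret Qp: prob_space Q by (rule Q)
  have iv: "Qp.indep_var (PiM {i} (\<lambda>_. borel)) (\<lambda>\<omega>. restrict (\<lambda>k. D k \<omega>) {i}) (PiM {j} (\<lambda>_. borel)) (\<lambda>\<omega>. restrict (\<lambda>k. D k \<omega>) {j})"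
    by (rule Qp.indep_var_restrict[OF D_iid']) (use assms in auto)
  have "Qp.indep_var borel ((\<lambda>f. f i) \<circ> (\<lambda>\<omega>. restrict (\<lambda>k. D k \<omega>) {i})) borel ((\<lambda>f. f j) \<circ> (\<lambda>\<omega>. restrict (\<lambda>k. D k \<omega>) {j}))"
    by (rule Qp.indep_var_compose[OF iv]) (auto intro!: measurable_component_singleton)
  moreover have "(\<lambda>f. f i) \<circ> (\<lambda>\<omega>. restrict (\<lambda>k. D k \<omega>) {i}) = D i" by (auto simp: fun_eq_iff)
  moreover have "(\<lambda>f. f j) \<circ> (\<lambda>\<omega>. restrict (\<lambda>k. D k \<omega>) {j}) = D j" by (auto simp: fun_eq_iff)
  ultimately show ?thesis by simp
qed

lemma QP_integral: fixes f :: "real \<times> real \<times> 'z \<Rightarrow> real" assumes f: "f \<in> borel_measurable borel" shows "(\<integral>\<omega>. f (D i \<omega>) \<partial>Q) = (\<integral>x. f x \<partial>P)"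
proof -
  have "(\<integral>x. f x \<partial>distr Q borel (D i)) = (\<integral>\<omega>. f (D i \<omega>) \<partial>Q)" by (rule integral_distr) (use f in auto)
  then show ?thesis by (simp add: distr_D)
qed

lemma QP_integrable: fixes f :: "real \<times> real \<times> 'z \<Rightarrow> real" assumes f: "f \<in> borel_measurable borel" shows "integrable Q (\<lambda>\<omega>. f (D i \<omega>)) \<longleftrightarrow> integrable P f"
proof -
  have "integrable (distr Q borel (D i)) f \<longleftrightarrow> integrable Q (\<lambda>\<omega>. f (D i \<omega>))" by (rule integrable_distr_eq) (use f in auto)
  then show ?thesis by (simp add: distr_D)
qed

lemma cheb_inner:
  assumes a: "a \<in> space SA" and n: "n > 0" and r: "r > 0"
  shows "measure Q {\<omega> \<in> space Q. r \<le> \<bar>(\<Sum>i<n. G n a (D i \<omega>)) / n - mm n a\<bar>} \<le> Cw\<^sup>2 * sig2 / (n * r\<^sup>2)"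
proof -
  interpret Qp: prob_space Q by (rule Q)
  interpret P: prob_space P by (rule Pp)
  define H where "H = (\<lambda>x. G n a x - mm n a)"
  have Hm[measurable]: "H \<in> borel_measurable borel" unfolding H_def using a by measurable
  have Gi: "integrable P (G n a)" by (rule G_int[OF a])
  have G2i: "integrable P (\<lambda>x. (G n a x)\<^sup>2)" by (rule G2_int[OF a])
  have H2: "(\<lambda>x. (H x)\<^sup>2) = (\<lambda>x. (G n a x)\<^sup>2 - 2 * mm n a * G n a x + (mm n a)\<^sup>2)"
    unfolding H_def by (simp add: fun_eq_iff power2_diff algebra_simps)
  have H2i: "integrable P (\<lambda>x. (H x)\<^sup>2)" unfolding H2 using Gi G2i by simp
  have H2int: "(\<integral>x. (H x)\<^sup>2 \<partial>P) = (\<integral>x. (G n a x)\<^sup>2 \<partial>P) - (mm n a)\<^sup>2"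
    unfolding H2 using Gi G2i by (simp add: mm_def power2_eq_square P.prob_space)
  have "measure Q {\<omega> \<in> space Q. r \<le> \<bar>(\<Sum>i<n. H (D i \<omega>)) / n\<bar>} \<le> Cw\<^sup>2 * sig2 / (n * r\<^sup>2)"
  proof (rule Qp.cheb_sum[where V="\<lambda>i \<omega>. H (D i \<omega>)", OF _ _ _ _ _ n r])
    fix i j :: nat assume "i \<noteq> j"
    then have "Qp.indep_var borel (H \<circ> D i) borel (H \<circ> D j)"
      by (intro Qp.indep_var_compose[OF indep_DD]) auto
    then show "Qp.indep_var borel (\<lambda>\<omega>. H (D i \<omega>)) borel (\<lambda>\<omega>. H (D j \<omega>))" by (simp add: comp_def)
  next
    fix i
    show "integrable Q (\<lambda>x. (H (D i x))\<^sup>2)" using H2i by (subst QP_integrable) auto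
    show "(\<lambda>\<omega>. H (D i \<omega>)) \<in> borel_measurable Q" by measurable
    show "(\<integral>\<omega>. H (D i \<omega>) \<partial>Q) = 0"
      using Gi by (subst QP_integral) (auto simp: H_def mm_def P.prob_space)
    have "(\<integral>\<omega>. (H (D i \<omega>))\<^sup>2 \<partial>Q) = (\<integral>x. (H x)\<^sup>2 \<partial>P)" by (subst QP_integral) auto
    also have "\<dots> \<le> Cw\<^sup>2 * sig2" unfolding H2int using G2_le[OF a, of n] zero_le_power2[of "mm n a"] by linarith
    finally show "(\<integral>\<omega>. (H (D i \<omega>))\<^sup>2 \<partial>Q) \<le> Cw\<^sup>2 * sig2" .
  qed
  moreover have "(\<Sum>i<n. H (D i \<omega>)) / n = (\<Sum>i<n. G n a (D i \<omega>)) / n - mm n a" for \<omega>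
    unfolding H_def using n by (simp add: sum_subtractf field_simps)
  ultimately show ?thesis by simp
qed

lemma cheb_outer:
  assumes n: "n > 0" and r: "r > 0"
  shows "emeasure Q {\<omega> \<in> space Q. r \<le> \<bar>(\<Sum>i<n. G n (A \<omega>) (D i \<omega>)) / n - mm n (A \<omega>)\<bar>} \<le> ennreal (Cw\<^sup>2 * sig2 / (n * r\<^sup>2))"
proof -
  interpret Qp: prob_space Q by (rule Q)
  interpret MAB: prob_space muAB unfolding muAB_def by (rule Qp.prob_space_distr) simp
  have Gm[measurable]: "(\<lambda>x. G n (f x) (g x)) \<in> borel_measurable M"
    if "f \<in> measurable M SA" "g \<in> borel_measurable M" for f g and M :: "'c measure"
    using measurable_Pair_compose_split[OF G_pair_meas that] by simp
  define F where "F = (\<lambda>p :: (nat \<Rightarrow> real \<times> real \<times> 'z) \<times> ('a \<times> 'b).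
      (if r \<le> \<bar>(\<Sum>i<n. G n (fst (snd p)) (fst p i)) / n - mm n (fst (snd p))\<bar> then 1 else 0 :: ennreal))"
  have Fm[measurable]: "F \<in> borel_measurable (PD \<Otimes>\<^sub>M (SA \<Otimes>\<^sub>M SB))"
    unfolding F_def by measurable
  define S where "S = {\<omega> \<in> space Q. r \<le> \<bar>(\<Sum>i<n. G n (A \<omega>) (D i \<omega>)) / n - mm n (A \<omega>)\<bar>}"
  have Sm: "S \<in> sets Q" unfolding S_def by measurable
  have "emeasure Q S = (\<integral>\<^sup>+\<omega>. indicator S \<omega> \<partial>Q)" using Sm by simp
  also have "\<dots> = (\<integral>\<^sup>+\<omega>. F (Dseq \<omega>, AB \<omega>) \<partial>Q)"
    by (rule nn_integral_cong) (auto simp: F_def S_def AB_def Dseq_D split: split_indicator)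
  also have "\<dots> = (\<integral>\<^sup>+ab. (\<integral>\<^sup>+\<omega>. F (Dseq \<omega>, ab) \<partial>Q) \<partial>muAB)"
    by (rule cond_AB[OF Fm])
  also have "\<dots> \<le> (\<integral>\<^sup>+ab. ennreal (Cw\<^sup>2 * sig2 / (n * r\<^sup>2)) \<partial>muAB)"
  proof (rule nn_integral_mono)
    fix ab assume "ab \<in> space muAB"
    then have a: "fst ab \<in> space SA" by (auto simp: muAB_def space_pair_measure)
    define Sa where "Sa = {\<omega> \<in> space Q. r \<le> \<bar>(\<Sum>i<n. G n (fst ab) (D i \<omega>)) / n - mm n (fst ab)\<bar>}"
    have Sam: "Sa \<in> sets Q" unfolding Sa_def using a by measurable
    have "(\<integral>\<^sup>+\<omega>. F (Dseq \<omega>, ab) \<partial>Q) = (\<integral>\<^sup>+\<omega>. indicator Sa \<omega> \<partial>Q)"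
      by (rule nn_integral_cong) (auto simp: F_def Sa_def Dseq_D split: split_indicator)
    also have "\<dots> = emeasure Q Sa" using Sam by simp
    also have "\<dots> = ennreal (measure Q Sa)" by (simp add: Qp.emeasure_eq_measure)
    also have "\<dots> \<le> ennreal (Cw\<^sup>2 * sig2 / (n * r\<^sup>2))"
      unfolding Sa_def by (intro ennreal_leI cheb_inner[OF a n r])
    finally show "(\<integral>\<^sup>+\<omega>. F (Dseq \<omega>, ab) \<partial>Q) \<le> ennreal (Cw\<^sup>2 * sig2 / (n * r\<^sup>2))" .
  qed
  also have "\<dots> = ennreal (Cw\<^sup>2 * sig2 / (n * r\<^sup>2))" by (simp add: MAB.emeasure_space_1)
  finally show ?thesis unfolding S_def .
qed

end

context L
begin

lemma lborel3: "(lborel :: (real \<times> real \<times> 'z) measure) = lborel \<Otimes>\<^sub>M (lborel \<Otimes>\<^sub>M lborel)"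
  by (simp add: lborel_prod)

lemma null_P: "N \<in> null_sets (lborel :: (real \<times> real \<times> 'z) measure) \<Longrightarrow> N \<in> null_sets P"
  using P_E0 unfolding absolutely_continuous_def by auto

lemma null_zc:
  assumes N: "N \<in> null_sets (lborel :: 'z measure)"
  shows "{x :: real \<times> real \<times> 'z. zc x \<in> N} \<in> null_sets P"
proof (rule null_P)
  have Ns: "N \<in> sets lborel" using N by auto
  have eq: "{x :: real \<times> real \<times> 'z. zc x \<in> N} = UNIV \<times> (UNIV \<times> N)" by (auto simp: zc_def)
  have "emeasure (lborel \<Otimes>\<^sub>M lborel) ((UNIV :: real set) \<times> N) = emeasure lborel (UNIV :: real set) * emeasure lborel N"
    using Ns by (intro lborel.emeasure_pair_measure_Times) auto
  then have e1: "emeasure (lborel \<Otimes>\<^sub>M lborel) ((UNIV :: real set) \<times> N) = 0" using N by auto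
  have s1: "(UNIV :: real set) \<times> N \<in> sets (lborel \<Otimes>\<^sub>M lborel)" using Ns by auto
  have "emeasure (lborel \<Otimes>\<^sub>M (lborel \<Otimes>\<^sub>M lborel)) ((UNIV :: real set) \<times> ((UNIV :: real set) \<times> N)) =
      emeasure lborel (UNIV :: real set) * emeasure (lborel \<Otimes>\<^sub>M lborel) ((UNIV :: real set) \<times> N)"
    using s1 by (intro lborel_pair.P.emeasure_pair_measure_Times) (auto simp: lborel_prod)
  then have e2: "emeasure (lborel \<Otimes>\<^sub>M (lborel \<Otimes>\<^sub>M lborel)) ((UNIV :: real set) \<times> ((UNIV :: real set) \<times> N)) = 0"
    using e1 by simp
  have s2: "(UNIV :: real set) \<times> ((UNIV :: real set) \<times> N) \<in> sets (lborel \<Otimes>\<^sub>M (lborel \<Otimes>\<^sub>M lborel))"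
    using s1 by auto
  show "{x :: real \<times> real \<times> 'z. zc x \<in> N} \<in> null_sets lborel"
    unfolding eq lborel3 using e2 s2 by auto
qed

lemma AE_zc:
  assumes "AE z in (lborel :: 'z measure). \<Phi> z"
  shows "AE x in P. \<Phi> (zc x)"
proof -
  from assms obtain N where N: "{z \<in> space lborel. \<not> \<Phi> z} \<subseteq> N" "emeasure lborel N = 0" "N \<in> sets lborel"
    by (auto elim!: AE_E)
  then have "N \<in> null_sets lborel" by auto
  then have "{x :: real \<times> real \<times> 'z. zc x \<in> N} \<in> null_sets P" by (rule null_zc)
  moreover have "{x \<in> space P. \<not> \<Phi> (zc x)} \<subseteq> {x. zc x \<in> N}" using N(1) by auto
  ultimately show ?thesis by (intro AE_I[of _ _ "{x. zc x \<in> N}"]) auto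
qed

lemma lborel2: "(lborel :: (real \<times> real \<times> 'z) measure) = lborel \<Otimes>\<^sub>M (lborel :: (real \<times> 'z) measure)"
  by (simp add: lborel_prod)

lemma hyper_null:
  fixes \<alpha> \<beta> w :: "'z \<Rightarrow> real"
  assumes c: "c \<noteq> 0" and [measurable]: "\<alpha> \<in> borel_measurable borel" "\<beta> \<in> borel_measurable borel" "w \<in> borel_measurable borel"
  shows "{x. (fst x - \<alpha> (zc x)) * (fst (snd x) - \<beta> (zc x)) * w (zc x) = c} \<in> null_sets P"
proof (rule null_P)
  define S where "S = {x :: real \<times> real \<times> 'z. (fst x - \<alpha> (zc x)) * (fst (snd x) - \<beta> (zc x)) * w (zc x) = c}"
  have Sb: "S \<in> sets borel" unfolding S_def by measurable
  have Ss: "S \<in> sets (lborel \<Otimes>\<^sub>M (lborel :: (real \<times> 'z) measure))" unfolding lborel2[symmetric] using Sb by simp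
  have "emeasure (lborel \<Otimes>\<^sub>M (lborel :: (real \<times> 'z) measure)) S = (\<integral>\<^sup>+y. emeasure lborel ((\<lambda>x. (x, y)) -` S) \<partial>(lborel :: (real \<times> 'z) measure))"
    using Ss by (intro lborel_pair.emeasure_pair_measure_alt2)
  also have "\<dots> = (\<integral>\<^sup>+y. 0 \<partial>(lborel :: (real \<times> 'z) measure))"
  proof (rule nn_integral_cong)
    fix y :: "real \<times> 'z"
    obtain y1 z where y: "y = (y1, z)" by (cases y)
    have "(\<lambda>x. (x, y)) -` S \<subseteq> {\<alpha> z + c / ((y1 - \<beta> z) * w z)}"
    proof
      fix x assume "x \<in> (\<lambda>x. (x, y)) -` S"
      then have h: "(x - \<alpha> z) * (y1 - \<beta> z) * w z = c" by (simp add: S_def y zc_def)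
      then have nz: "(y1 - \<beta> z) * w z \<noteq> 0" using c by auto
      from h have "(x - \<alpha> z) * ((y1 - \<beta> z) * w z) = c" by (simp add: mult.assoc)
      then have "x - \<alpha> z = c / ((y1 - \<beta> z) * w z)" using nz by (simp add: field_simps)
      then show "x \<in> {\<alpha> z + c / ((y1 - \<beta> z) * w z)}" by simp
    qed
    then have "emeasure lborel ((\<lambda>x. (x, y)) -` S) \<le> emeasure lborel {\<alpha> z + c / ((y1 - \<beta> z) * w z)}"
      by (intro emeasure_mono) auto
    then show "emeasure lborel ((\<lambda>x. (x, y)) -` S) = 0" by simp
  qed
  also have "\<dots> = 0" by simp
  finally show "{x. (fst x - \<alpha> (zc x)) * (fst (snd x) - \<beta> (zc x)) * w (zc x) = c} \<in> null_sets lborel"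
    using Sb by (simp add: S_def[symmetric] lborel2[symmetric] null_sets_def)
qed

end

context L
begin

definition Rf where "Rf n a b x = (fst x - fhat n b (zc x)) * (fst (snd x) - ghat n b (zc x)) * what n a (zc x)"

lemma Rf_pair_meas: "(\<lambda>(ab, x). Rf n (fst ab) (snd ab) x) \<in> borel_measurable ((SA \<Otimes>\<^sub>M SB) \<Otimes>\<^sub>M borel)"
  unfolding Rf_def by measurable

lemma Rf_m[measurable (raw)]:
  "f \<in> measurable M SA \<Longrightarrow> g \<in> measurable M SB \<Longrightarrow> h \<in> borel_measurable M \<Longrightarrow> (\<lambda>x. Rf n (f x) (g x) (h x)) \<in> borel_measurable M"
  using measurable_Pair_compose_split[OF Rf_pair_meas, of "\<lambda>x. (f x, g x)" M h] by (simp add: measurable_Pair)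

lemma R01_null:
  "emeasure Q {\<omega> \<in> space Q. Rf n (A \<omega>) (B \<omega>) (D 0 \<omega>) = Rf n (A \<omega>) (B \<omega>) (D 1 \<omega>) \<and> Rf n (A \<omega>) (B \<omega>) (D 0 \<omega>) \<noteq> 0} = 0"
proof -
  interpret Qp: prob_space Q by (rule Q)
  define F where "F = (\<lambda>p :: (nat \<Rightarrow> real \<times> real \<times> 'z) \<times> ('a \<times> 'b).
      (if Rf n (fst (snd p)) (snd (snd p)) (fst p 0) = Rf n (fst (snd p)) (snd (snd p)) (fst p 1) \<and>
          Rf n (fst (snd p)) (snd (snd p)) (fst p 0) \<noteq> 0 then 1 else 0 :: ennreal))"
  have Fm[measurable]: "F \<in> borel_measurable (PD \<Otimes>\<^sub>M (SA \<Otimes>\<^sub>M SB))"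
    unfolding F_def by measurable
  define S where "S = {\<omega> \<in> space Q. Rf n (A \<omega>) (B \<omega>) (D 0 \<omega>) = Rf n (A \<omega>) (B \<omega>) (D 1 \<omega>) \<and> Rf n (A \<omega>) (B \<omega>) (D 0 \<omega>) \<noteq> 0}"
  have Sm: "S \<in> sets Q" unfolding S_def by measurable
  have "emeasure Q S = (\<integral>\<^sup>+\<omega>. indicator S \<omega> \<partial>Q)" using Sm by simp
  also have "\<dots> = (\<integral>\<^sup>+\<omega>. F (Dseq \<omega>, AB \<omega>) \<partial>Q)"
    by (rule nn_integral_cong) (auto simp: F_def S_def AB_def Dseq_D split: split_indicator)
  also have "\<dots> = (\<integral>\<^sup>+ab. (\<integral>\<^sup>+\<omega>. F (Dseq \<omega>, ab) \<partial>Q) \<partial>muAB)"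
    by (rule cond_AB[OF Fm])
  also have "\<dots> = (\<integral>\<^sup>+ab. 0 \<partial>muAB)"
  proof (rule nn_integral_cong)
    fix ab assume "ab \<in> space muAB"
    then have a[measurable]: "fst ab \<in> space SA" and b[measurable]: "snd ab \<in> space SB"
      by (auto simp: muAB_def space_pair_measure)
    define R where "R = Rf n (fst ab) (snd ab)"
    have Rm[measurable]: "R \<in> borel_measurable borel" unfolding R_def by measurable
    define g where "g = (\<lambda>p :: (real \<times> real \<times> 'z) \<times> (nat \<Rightarrow> real \<times> real \<times> 'z).
       (if R (fst p) = R (snd p 0) \<and> R (snd p 0) \<noteq> 0 then 1 else 0 :: ennreal))"
    have c0: "(\<lambda>p. snd p 0) \<in> measurable (borel \<Otimes>\<^sub>M PR 1) borel"
    proof -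
      have "(\<lambda>x. x 0) \<in> measurable (PR 1) borel" unfolding PR_def
        by (intro measurable_component_singleton) auto
      then show ?thesis by (rule measurable_compose[OF measurable_snd])
    qed
    have gm: "g \<in> borel_measurable (borel \<Otimes>\<^sub>M PR 1)"
      unfolding g_def using c0 by measurable
    have "(\<integral>\<^sup>+\<omega>. F (Dseq \<omega>, ab) \<partial>Q) = (\<integral>\<^sup>+\<omega>. g (D 1 \<omega>, Rest 1 \<omega>) \<partial>Q)"
      by (rule nn_integral_cong) (auto simp: F_def g_def R_def Dseq_D Rest_def)
    also have "\<dots> = (\<integral>\<^sup>+r. (\<integral>\<^sup>+\<omega>. g (D 1 \<omega>, r) \<partial>Q) \<partial>distr Q (PR 1) (Rest 1))"
      by (rule indep_prod_nn_integral[OF Q D_meas' Rest_meas indep_i gm])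
    also have "\<dots> = (\<integral>\<^sup>+r. 0 \<partial>distr Q (PR 1) (Rest 1))"
    proof (rule nn_integral_cong)
      fix r assume r: "r \<in> space (distr Q (PR 1) (Rest 1))"
      have gr[measurable]: "(\<lambda>x. g (x, r)) \<in> borel_measurable borel"
        using gm r by (intro measurable_Pair_compose_split[of "\<lambda>x y. g (x, y)" borel "PR 1"]) auto
      have "(\<integral>\<^sup>+\<omega>. g (D 1 \<omega>, r) \<partial>Q) = (\<integral>\<^sup>+x. g (x, r) \<partial>distr Q borel (D 1))"
        by (subst nn_integral_distr) auto
      also have "\<dots> = (\<integral>\<^sup>+x. g (x, r) \<partial>P)" by (simp add: distr_D)
      also have "\<dots> = (\<integral>\<^sup>+x. 0 \<partial>P)"
      proof (cases "R (r 0) = 0")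
        case True
        then show ?thesis by (intro nn_integral_cong) (simp add: g_def)
      next
        case False
        have N: "{x. R x = R (r 0)} \<in> null_sets P"
          unfolding R_def Rf_def using False[unfolded R_def Rf_def]
          by (intro hyper_null) measurable
        show ?thesis
        proof (rule nn_integral_cong_AE)
          show "AE x in P. g (x, r) = 0"
            using AE_not_in[OF N] by eventually_elim (simp add: g_def)
        qed
      qed
      finally show "(\<integral>\<^sup>+\<omega>. g (D 1 \<omega>, r) \<partial>Q) = 0" by simp
    qed
    finally show "(\<integral>\<^sup>+\<omega>. F (Dseq \<omega>, ab) \<partial>Q) = 0" by simp
  qed
  finally show ?thesis unfolding S_def by simp
qed

lemma E1_markov:
  assumes n: "n > 0" and K1: "K1 > 0"
  shows "measure Q {\<omega> \<in> space Q. K1 < (\<Sum>i<n. (eps (D i \<omega>) * xi (D i \<omega>))\<^sup>2) / n} \<le> sig2 / K1"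
proof -
  interpret Qp: prob_space Q by (rule Q)
  define u where "u = (\<lambda>\<omega>. (\<Sum>i<n. (eps (D i \<omega>) * xi (D i \<omega>))\<^sup>2) / n)"
  have ui: "integrable Q (\<lambda>\<omega>. (eps (D i \<omega>) * xi (D i \<omega>))\<^sup>2)" for i
    using e2_int by (subst QP_integrable[where f="\<lambda>x. (eps x * xi x)\<^sup>2"]) auto
  have uint: "integrable Q u" unfolding u_def using ui by (intro integrable_divide Bochner_Integration.integrable_sum) auto
  have uI: "(\<integral>\<omega>. u \<omega> \<partial>Q) = sig2"
  proof -
    have "(\<integral>\<omega>. u \<omega> \<partial>Q) = (\<Sum>i<n. (\<integral>\<omega>. (eps (D i \<omega>) * xi (D i \<omega>))\<^sup>2 \<partial>Q)) / n"
      unfolding u_def using ui by (simp add: Bochner_Integration.integral_sum)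
    also have "\<dots> = (\<Sum>i<n. sig2) / n"
      unfolding sig2_def by (subst QP_integral[where f="\<lambda>x. (eps x * xi x)\<^sup>2"]) auto
    finally show ?thesis using n by simp
  qed
  have "measure Q {\<omega> \<in> space Q. K1 < u \<omega>} \<le> measure Q {\<omega> \<in> space Q. K1 \<le> u \<omega>}"
    by (rule Qp.finite_measure_mono) (auto simp: u_def)
  also have "\<dots> \<le> (\<integral>\<omega>. u \<omega> \<partial>Q) / K1"
    using uint K1 by (intro integral_Markov_inequality_measure[where A="space Q"]) (auto simp: u_def intro!: AE_I2 divide_nonneg_nonneg sum_nonneg)
  finally have X: "measure Q {\<omega> \<in> space Q. K1 < u \<omega>} \<le> sig2 / K1" using uI by simp
  then show ?thesis unfolding u_def .
qed

lemma hz_int: "integrable P (\<lambda>x. hP (zc x))"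
proof -
  interpret S: sigma_finite_subalgebra P FZ by (rule FZ_sub)
  have ae: "AE x in P. hP (zc x) = real_cond_exp P FZ (\<lambda>x. eps x * xi x) x"
    using hP unfolding is_cond_exp_fun_def FZ_def eps_def xi_def zc_def by auto
  have "integrable P (real_cond_exp P FZ (\<lambda>x. eps x * xi x))" by (rule S.real_cond_exp_int[OF e_int])
  moreover have m1: "(\<lambda>x. hP (zc x)) \<in> borel_measurable P" by (intro meas_P) measurable
  moreover have m2: "real_cond_exp P FZ (\<lambda>x. eps x * xi x) \<in> borel_measurable P" by measurable
  ultimately show ?thesis using integrable_cong_AE[OF m1 m2 ae] by simp
qed

definition m0 where "m0 = (\<integral>x. \<bar>hP (zc x)\<bar> \<partial>P)"

lemma m0_pos: "m0 > 0"
proof -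
  have int: "integrable P (\<lambda>x. \<bar>hP (zc x)\<bar>)" using hz_int by simp
  have ge: "m0 \<ge> 0" unfolding m0_def by simp
  show ?thesis
  proof (rule ccontr)
    assume "\<not> m0 > 0"
    then have "m0 = 0" using ge by simp
    then have "AE x in P. \<bar>hP (zc x)\<bar> = 0" unfolding m0_def using integral_nonneg_eq_0_iff_AE[OF int] by simp
    then have "AE x in P. hP (snd (snd x)) = 0" by (simp add: zc_def)
    then show False using h_nonzero by simp
  qed
qed

lemma mm_lim: "AE \<omega> in Q. (\<lambda>n. mm n (A \<omega>)) \<longlonglongrightarrow> m0"
  using what_lim AE_space
proof eventually_elim
  case (elim \<omega>)
  define a where "a = A \<omega>"
  have a[measurable]: "a \<in> space SA" unfolding a_def by (rule measurable_space[OF A_meas]) (use elim in auto)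
  have eqm: "mm n a = (\<integral>x. what n a (zc x) * hP (zc x) \<partial>P)" for n
    unfolding mm_def G_def by (rule cond_e(2)) (auto intro: Cw)
  have AEc: "AE x in P. hP (zc x) \<noteq> 0 \<longrightarrow> (\<lambda>n. what n a (zc x)) \<longlonglongrightarrow> sgn (hP (zc x))"
    using AE_zc[OF elim(1)] unfolding a_def .
  have "(\<lambda>n. \<integral>x. what n a (zc x) * hP (zc x) \<partial>P) \<longlonglongrightarrow> (\<integral>x. \<bar>hP (zc x)\<bar> \<partial>P)"
  proof (rule integral_dominated_convergence[where w="\<lambda>x. Cw * \<bar>hP (zc x)\<bar>"])
    show "(\<lambda>x. \<bar>hP (zc x)\<bar>) \<in> borel_measurable P" by (intro meas_P) measurable
    show "(\<lambda>x. what n a (zc x) * hP (zc x)) \<in> borel_measurable P" for n by (intro meas_P) measurable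
    show "integrable P (\<lambda>x. Cw * \<bar>hP (zc x)\<bar>)" using hz_int by simp
    show "AE x in P. (\<lambda>n. what n a (zc x) * hP (zc x)) \<longlonglongrightarrow> \<bar>hP (zc x)\<bar>"
      using AEc
    proof eventually_elim
      case (elim x)
      show ?case
      proof (cases "hP (zc x) = 0")
        case True then show ?thesis by simp
      next
        case False
        then have "(\<lambda>n. what n a (zc x) * hP (zc x)) \<longlonglongrightarrow> sgn (hP (zc x)) * hP (zc x)"
          using elim by (intro tendsto_mult_right) auto
        moreover have "sgn (hP (zc x)) * hP (zc x) = \<bar>hP (zc x)\<bar>" by (auto simp: sgn_if)
        ultimately show ?thesis by simp
      qed
    qed
    show "AE x in P. norm (what n a (zc x) * hP (zc x)) \<le> Cw * \<bar>hP (zc x)\<bar>" for n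
      using Cw(2)[of n a] by (intro AE_I2) (simp add: abs_mult mult_right_mono)
  qed
  then have "(\<lambda>n. mm n a) \<longlonglongrightarrow> m0" unfolding m0_def using eqm by simp
  then show ?case unfolding a_def .
qed

lemma meas_tendsto_0:
  fixes f :: "nat \<Rightarrow> 'w \<Rightarrow> real"
  assumes lim: "AE \<omega> in Q. (\<lambda>n. f n \<omega>) \<longlonglongrightarrow> lim0" and c: "c < lim0"
    and fm[measurable]: "\<And>n. f n \<in> borel_measurable Q"
  shows "(\<lambda>n. measure Q {\<omega> \<in> space Q. f n \<omega> < c}) \<longlonglongrightarrow> 0"
proof -
  interpret Qp: prob_space Q by (rule Q)
  have "(\<lambda>n. \<integral>\<omega>. indicator {\<omega> \<in> space Q. f n \<omega> < c} \<omega> \<partial>Q) \<longlonglongrightarrow> (\<integral>\<omega>. (0::real) \<partial>Q)"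
  proof (rule integral_dominated_convergence[where w="\<lambda>_. 1"])
    show "AE x in Q. (\<lambda>n. indicator {\<omega> \<in> space Q. f n \<omega> < c} x :: real) \<longlonglongrightarrow> 0"
      using lim
    proof eventually_elim
      case (elim x)
      have "eventually (\<lambda>n. f n x > c) sequentially" using order_tendstoD(1)[OF elim c] by simp
      then have "eventually (\<lambda>n. (indicator {\<omega> \<in> space Q. f n \<omega> < c} x :: real) = 0) sequentially"
        by eventually_elim (auto split: split_indicator)
      then show ?case by (rule tendsto_eventually)
    qed
    show "AE x in Q. norm (indicator {\<omega> \<in> space Q. f n \<omega> < c} x :: real) \<le> 1" for n
      by (intro AE_I2) (auto split: split_indicator)
  qed auto
  then show ?thesis by simp
qed

end

context L
begin

lemma X_meas[measurable]: "X i \<in> borel_measurable Q"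
  using measurable_compose[OF D_meas' fst_meas, of i] by (simp add: D_def)
lemma Y_meas[measurable]: "Y i \<in> borel_measurable Q"
  using measurable_compose[OF D_meas' fsnd_meas, of i] by (simp add: D_def)
lemma Z_meas[measurable]: "Z i \<in> borel_measurable Q"
  using measurable_compose[OF D_meas' zc_meas, of i] by (simp add: D_def zc_def)

lemma mUn: "S1 \<in> sets Q \<Longrightarrow> S2 \<in> sets Q \<Longrightarrow> measure Q S1 \<le> c1 \<Longrightarrow> measure Q S2 \<le> c2 \<Longrightarrow> measure Q (S1 \<union> S2) \<le> c1 + c2"
  using measure_Un_le[of S1 Q S2] by linarith

lemma emeas_le: "emeasure Q S \<le> ennreal c \<Longrightarrow> c \<ge> 0 \<Longrightarrow> measure Q S \<le> c"
proof -
  interpret Qp: prob_space Q by (rule Q)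
  assume "emeasure Q S \<le> ennreal c" "c \<ge> 0"
  then show ?thesis by (simp add: Qp.emeasure_eq_measure)
qed

end

context L
begin

lemma G_m[measurable (raw)]:
  "f \<in> measurable M SA \<Longrightarrow> g \<in> borel_measurable M \<Longrightarrow> (\<lambda>x. G n (f x) (g x)) \<in> borel_measurable M"
  by (rule measurable_Pair_compose_split[OF G_pair_meas])

theorem main_result:
  "\<forall>M>0. (\<lambda>n. measure Q {\<omega> \<in> space Q.
            Tstat n (\<lambda>i. (X i \<omega> - fhat n (B \<omega>) (Z i \<omega>)) * (Y i \<omega> - ghat n (B \<omega>) (Z i \<omega>))
                          * what n (A \<omega>) (Z i \<omega>)) \<ge> M}) \<longlonglongrightarrow> 1"
proof (intro allI impI)
  interpret Qp: prob_space Q by (rule Q)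
  fix M :: real assume M: "M > 0"
  define T where "T n \<omega> = Tstat n (\<lambda>i. (X i \<omega> - fhat n (B \<omega>) (Z i \<omega>)) * (Y i \<omega> - ghat n (B \<omega>) (Z i \<omega>))
                          * what n (A \<omega>) (Z i \<omega>))" for n \<omega>
  have Tm[measurable]: "T n \<in> borel_measurable Q" for n
    unfolding T_def Tstat_def by measurable
  define bad where "bad n = {\<omega> \<in> space Q. \<not> M \<le> T n \<omega>}" for n
  have badm: "bad n \<in> sets Q" for n unfolding bad_def by measurable
  have good: "measure Q {\<omega> \<in> space Q. T n \<omega> \<ge> M} = 1 - measure Q (bad n)" for n
  proof -
    have "{\<omega> \<in> space Q. T n \<omega> \<ge> M} = space Q - bad n" by (auto simp: bad_def)
    then show ?thesis using Qp.prob_compl[OF badm] by simp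
  qed
  have bad_lim: "(\<lambda>n. measure Q (bad n)) \<longlonglongrightarrow> 0"
  proof (rule order_tendstoI)
    fix a :: real assume "a < 0"
    then show "eventually (\<lambda>n. a < measure Q (bad n)) sequentially"
      by (intro always_eventually allI) (metis less_le_trans measure_nonneg)
  next
    fix \<epsilon> :: real assume eps: "0 < \<epsilon>"
    show "eventually (\<lambda>n. measure Q (bad n) < \<epsilon>) sequentially"
      proof -
        have m0p: "m0 > 0" by (rule m0_pos)
        have Cwp: "Cw > 0" by (rule Cw(1))
        have sig0: "sig2 \<ge> 0" unfolding sig2_def by simp
        define \<tau> where "\<tau> = (m0 / (12 * Cw))\<^sup>2"
        have taup: "\<tau> > 0" unfolding \<tau>_def using m0p Cwp by simp
        have sqtau: "sqrt \<tau> = m0 / (12 * Cw)" unfolding \<tau>_def using m0p Cwp by simp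
        define K1 where "K1 = 8 * sig2 / \<epsilon> + 1"
        have K1p: "K1 > 0" unfolding K1_def using sig0 eps by (simp add: add_nonneg_pos)
        define t where "t = \<tau> * \<epsilon> / 8"
        have tp: "t > 0" unfolding t_def using taup eps by simp
        define \<kappa> where "\<kappa> = (m0 / 4) / sqrt (4 * Cw\<^sup>2 * (K1 + 3 * \<tau>))"
        have kp: "\<kappa> > 0" unfolding \<kappa>_def using m0p Cwp K1p taup by simp
        define N0 where "N0 = nat \<lceil>(M / \<kappa>)\<^sup>2\<rceil> + 2"
        define U1 where "U1 n = {\<omega> \<in> space Q. mm n (A \<omega>) < 3 * m0 / 4}" for n
        define U2 where "U2 n = {\<omega> \<in> space Q. m0 / 4 \<le> \<bar>(\<Sum>i<n. G n (A \<omega>) (D i \<omega>)) / n - mm n (A \<omega>)\<bar>}" for n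
        define U3 where "U3 n = {\<omega> \<in> space Q. K1 < (\<Sum>i<n. (eps (D i \<omega>) * xi (D i \<omega>))\<^sup>2) / n}" for n
        define U4 where "U4 n = {\<omega> \<in> space Q. \<tau> < (\<Sum>i<n. (eps (D i \<omega>))\<^sup>2 * (gP (zc (D i \<omega>)) - ghat n (B \<omega>) (zc (D i \<omega>)))\<^sup>2) / n
             \<and> (\<Sum>i<n. (gP (zc (D i \<omega>)) - ghat n (B \<omega>) (zc (D i \<omega>)))\<^sup>2 * uP (zc (D i \<omega>))) / n \<le> t}" for n
        define U5 where "U5 n = {\<omega> \<in> space Q. t < \<bar>(\<Sum>i<n. (gP (Z i \<omega>) - ghat n (B \<omega>) (Z i \<omega>))\<^sup>2 * uP (Z i \<omega>)) / n\<bar>}" for n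
        define U6 where "U6 n = {\<omega> \<in> space Q. \<tau> < (\<Sum>i<n. (xi (D i \<omega>))\<^sup>2 * (fP (zc (D i \<omega>)) - fhat n (B \<omega>) (zc (D i \<omega>)))\<^sup>2) / n
             \<and> (\<Sum>i<n. (fP (zc (D i \<omega>)) - fhat n (B \<omega>) (zc (D i \<omega>)))\<^sup>2 * vP (zc (D i \<omega>))) / n \<le> t}" for n
        define U7 where "U7 n = {\<omega> \<in> space Q. t < \<bar>(\<Sum>i<n. (fP (Z i \<omega>) - fhat n (B \<omega>) (Z i \<omega>))\<^sup>2 * vP (Z i \<omega>)) / n\<bar>}" for n
        define U8 where "U8 n = {\<omega> \<in> space Q. \<tau> < \<bar>((\<Sum>i<n. (fP (Z i \<omega>) - fhat n (B \<omega>) (Z i \<omega>))\<^sup>2) / real n) *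
               ((\<Sum>i<n. (gP (Z i \<omega>) - ghat n (B \<omega>) (Z i \<omega>))\<^sup>2) / real n) / (1 / real n)\<bar>}" for n
        define U9 where "U9 n = {\<omega> \<in> space Q. Rf n (A \<omega>) (B \<omega>) (D 0 \<omega>) = Rf n (A \<omega>) (B \<omega>) (D 1 \<omega>) \<and> Rf n (A \<omega>) (B \<omega>) (D 0 \<omega>) \<noteq> 0}" for n
        have Um: "U1 n \<in> sets Q" "U2 n \<in> sets Q" "U3 n \<in> sets Q" "U4 n \<in> sets Q" "U5 n \<in> sets Q"
          "U6 n \<in> sets Q" "U7 n \<in> sets Q" "U8 n \<in> sets Q" "U9 n \<in> sets Q" for n
          unfolding U1_def U2_def U3_def U4_def U5_def U6_def U7_def U8_def U9_def by (measurable; fail)+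
        have ZD: "zc (D i \<omega>) = Z i \<omega>" for i \<omega> by (simp add: zc_def D_def)
        have L1: "(\<lambda>n. measure Q (U1 n)) \<longlonglongrightarrow> 0"
          unfolding U1_def by (rule meas_tendsto_0[OF mm_lim]) (use m0p in auto)
        define b2 where "b2 n = Cw\<^sup>2 * sig2 / (real n * (m0 / 4)\<^sup>2)" for n
        have L2: "measure Q (U2 n) \<le> b2 n" if n: "n > 0" for n
          unfolding U2_def b2_def using m0p sig0
          by (intro emeas_le cheb_outer n) auto
        have L2': "b2 \<longlonglongrightarrow> 0"
        proof -
          have eq: "b2 = (\<lambda>n. (Cw\<^sup>2 * sig2 / (m0 / 4)\<^sup>2) / real n)"
            unfolding b2_def by (auto simp: fun_eq_iff field_simps)
          show ?thesis unfolding eq by (rule lim_const_over_n)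
        qed
        have L3: "measure Q (U3 n) \<le> \<epsilon> / 8" if n: "n > 0" for n
        proof -
          have "measure Q (U3 n) \<le> sig2 / K1" unfolding U3_def by (rule E1_markov[OF n K1p])
          also have "\<dots> \<le> \<epsilon> / 8"
            unfolding K1_def using eps sig0 by (simp add: field_simps)
          finally show ?thesis .
        qed
        have L4: "measure Q (U4 n) \<le> \<epsilon> / 8" if n: "n > 0" for n
        proof -
          have "emeasure Q (U4 n) \<le> ennreal (t / \<tau>)"
            unfolding U4_def
          proof (rule trunc_generic[where q=eps and u="\<lambda>x. uP (zc x)" and u'=uP and \<delta>="\<lambda>n b z. gP z - ghat n b z"])
            show "(\<integral>\<^sup>+x. ennreal ((eps x)\<^sup>2) * \<phi> (zc x) \<partial>P) = (\<integral>\<^sup>+x. ennreal (uP (zc x)) * \<phi> (zc x) \<partial>P)"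
              if "\<phi> \<in> borel_measurable borel" for \<phi> :: "'z \<Rightarrow> ennreal" by (rule cond_eps2[OF that])
            show "AE x in P. 0 \<le> uP (zc x)" using uP unfolding is_nn_cond_exp_fun_def zc_def by auto
            show "(\<lambda>(b, z). gP z - ghat n b z) \<in> borel_measurable (SB \<Otimes>\<^sub>M borel)"
              using ghat_meas[of n] by measurable
          qed (use n taup tp in auto)
          then have "measure Q (U4 n) \<le> t / \<tau>" using tp taup by (intro emeas_le) auto
          also have "t / \<tau> = \<epsilon> / 8" unfolding t_def using taup by simp
          finally show ?thesis .
        qed
        have L5: "(\<lambda>n. measure Q (U5 n)) \<longlonglongrightarrow> 0"
          using Bg[unfolded o_P_def, rule_format, OF tp] unfolding U5_def by simp
        have L6: "measure Q (U6 n) \<le> \<epsilon> / 8" if n: "n > 0" for n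
        proof -
          have "emeasure Q (U6 n) \<le> ennreal (t / \<tau>)"
            unfolding U6_def
          proof (rule trunc_generic[where q=xi and u="\<lambda>x. vP (zc x)" and u'=vP and \<delta>="\<lambda>n b z. fP z - fhat n b z"])
            show "(\<integral>\<^sup>+x. ennreal ((xi x)\<^sup>2) * \<phi> (zc x) \<partial>P) = (\<integral>\<^sup>+x. ennreal (vP (zc x)) * \<phi> (zc x) \<partial>P)"
              if "\<phi> \<in> borel_measurable borel" for \<phi> :: "'z \<Rightarrow> ennreal" by (rule cond_xi2[OF that])
            show "AE x in P. 0 \<le> vP (zc x)" using vP unfolding is_nn_cond_exp_fun_def zc_def by auto
            show "(\<lambda>(b, z). fP z - fhat n b z) \<in> borel_measurable (SB \<Otimes>\<^sub>M borel)"
              using fhat_meas[of n] by measurable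
          qed (use n taup tp in auto)
          then have "measure Q (U6 n) \<le> t / \<tau>" using tp taup by (intro emeas_le) auto
          also have "t / \<tau> = \<epsilon> / 8" unfolding t_def using taup by simp
          finally show ?thesis .
        qed
        have L7: "(\<lambda>n. measure Q (U7 n)) \<longlonglongrightarrow> 0"
          using Bf[unfolded o_P_def, rule_format, OF tp] unfolding U7_def by simp
        have L8: "(\<lambda>n. measure Q (U8 n)) \<longlonglongrightarrow> 0"
          using AfAg[unfolded o_P_def, rule_format, OF taup] unfolding U8_def by simp
        have L9: "measure Q (U9 n) = 0" for n
          using R01_null[of n] unfolding U9_def by (simp add: Qp.emeasure_eq_measure)
        have incl: "bad n \<subseteq> U1 n \<union> (U2 n \<union> (U3 n \<union> (U4 n \<union> (U5 n \<union> (U6 n \<union> (U7 n \<union> (U8 n \<union> U9 n)))))))"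
          if nN: "n \<ge> N0" for n
        proof
          fix \<omega> assume "\<omega> \<in> bad n"
          then have ws: "\<omega> \<in> space Q" and notT: "\<not> M \<le> T n \<omega>" by (auto simp: bad_def)
          show "\<omega> \<in> U1 n \<union> (U2 n \<union> (U3 n \<union> (U4 n \<union> (U5 n \<union> (U6 n \<union> (U7 n \<union> (U8 n \<union> U9 n)))))))"
          proof (rule ccontr)
            assume "\<omega> \<notin> U1 n \<union> (U2 n \<union> (U3 n \<union> (U4 n \<union> (U5 n \<union> (U6 n \<union> (U7 n \<union> (U8 n \<union> U9 n)))))))"
            then have n1: "\<omega> \<notin> U1 n" and n2: "\<omega> \<notin> U2 n" and n3: "\<omega> \<notin> U3 n" and n4: "\<omega> \<notin> U4 n"
              and n5: "\<omega> \<notin> U5 n" and n6: "\<omega> \<notin> U6 n" and n7: "\<omega> \<notin> U7 n" and n8: "\<omega> \<notin> U8 n" and n9: "\<omega> \<notin> U9 n"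
              by auto
            define ep where "ep i = X i \<omega> - fP (Z i \<omega>)" for i
            define xx where "xx i = Y i \<omega> - gP (Z i \<omega>)" for i
            define dF where "dF i = fP (Z i \<omega>) - fhat n (B \<omega>) (Z i \<omega>)" for i
            define dG where "dG i = gP (Z i \<omega>) - ghat n (B \<omega>) (Z i \<omega>)" for i
            define w where "w i = what n (A \<omega>) (Z i \<omega>)" for i
            define R where "R i = Rf n (A \<omega>) (B \<omega>) (D i \<omega>)" for i
            have epD: "eps (D i \<omega>) = ep i" for i by (simp add: ep_def eps_def D_def zc_def)
            have xxD: "xi (D i \<omega>) = xx i" for i by (simp add: xx_def xi_def D_def zc_def)
            have nn2: "2 \<le> n" using nN by (simp add: N0_def)
            then have npos: "real n > 0" by simp
            have hw: "\<bar>w i\<bar> \<le> Cw" for i unfolding w_def by (rule Cw(2))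
            have hR: "R i = (ep i + dF i) * (xx i + dG i) * w i" for i
              by (simp add: R_def Rf_def ep_def xx_def dF_def dG_def w_def D_def zc_def)
            have hS0: "m0 / 2 \<le> (\<Sum>i<n. w i * (ep i * xx i)) / n"
            proof -
              have a1: "3 * m0 / 4 \<le> mm n (A \<omega>)" using n1 ws by (simp add: U1_def not_less)
              have a2: "\<bar>(\<Sum>i<n. G n (A \<omega>) (D i \<omega>)) / n - mm n (A \<omega>)\<bar> < m0 / 4"
                using n2 ws by (simp add: U2_def not_le)
              have "(\<Sum>i<n. G n (A \<omega>) (D i \<omega>)) = (\<Sum>i<n. w i * (ep i * xx i))"
                by (simp add: G_def epD xxD w_def ZD)
              then have a2': "\<bar>(\<Sum>i<n. w i * (ep i * xx i)) / n - mm n (A \<omega>)\<bar> < m0 / 4" using a2 by simp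
              show ?thesis using a1 a2' by linarith
            qed
            have hE1: "(\<Sum>i<n. (ep i * xx i)\<^sup>2) / n \<le> K1"
              using n3 ws by (simp add: U3_def not_less epD xxD)
            have hE2: "(\<Sum>i<n. (ep i)\<^sup>2 * (dG i)\<^sup>2) / n \<le> \<tau>"
            proof -
              have a5': "\<not> t < \<bar>(\<Sum>i<n. (dG i)\<^sup>2 * uP (Z i \<omega>)) / n\<bar>"
                using n5 ws by (simp add: U5_def dG_def)
              have a5: "(\<Sum>i<n. (dG i)\<^sup>2 * uP (Z i \<omega>)) / n \<le> t"
                using a5' abs_ge_self[of "(\<Sum>i<n. (dG i)\<^sup>2 * uP (Z i \<omega>)) / n"] by linarith
              have a4: "\<not> (\<tau> < (\<Sum>i<n. (ep i)\<^sup>2 * (dG i)\<^sup>2) / n \<and> (\<Sum>i<n. (dG i)\<^sup>2 * uP (Z i \<omega>)) / n \<le> t)"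
                using n4 ws by (simp add: U4_def epD dG_def ZD)
              show ?thesis using a4 a5 by linarith
            qed
            have hE3: "(\<Sum>i<n. (dF i)\<^sup>2 * (xx i)\<^sup>2) / n \<le> \<tau>"
            proof -
              have a7': "\<not> t < \<bar>(\<Sum>i<n. (dF i)\<^sup>2 * vP (Z i \<omega>)) / n\<bar>"
                using n7 ws by (simp add: U7_def dF_def)
              have a7: "(\<Sum>i<n. (dF i)\<^sup>2 * vP (Z i \<omega>)) / n \<le> t"
                using a7' abs_ge_self[of "(\<Sum>i<n. (dF i)\<^sup>2 * vP (Z i \<omega>)) / n"] by linarith
              have a6: "\<not> (\<tau> < (\<Sum>i<n. (xx i)\<^sup>2 * (dF i)\<^sup>2) / n \<and> (\<Sum>i<n. (dF i)\<^sup>2 * vP (Z i \<omega>)) / n \<le> t)"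
                using n6 ws by (simp add: U6_def xxD dF_def ZD)
              have eqc: "(\<Sum>i<n. (xx i)\<^sup>2 * (dF i)\<^sup>2) = (\<Sum>i<n. (dF i)\<^sup>2 * (xx i)\<^sup>2)" by (simp add: mult.commute)
              have a6': "\<not> (\<tau> < (\<Sum>i<n. (dF i)\<^sup>2 * (xx i)\<^sup>2) / n \<and> (\<Sum>i<n. (dF i)\<^sup>2 * vP (Z i \<omega>)) / n \<le> t)"
                using a6 unfolding eqc .
              show ?thesis using a6' a7 by linarith
            qed
            have hE4: "(\<Sum>i<n. (dF i)\<^sup>2) / n * ((\<Sum>i<n. (dG i)\<^sup>2) / n) * n \<le> \<tau>"
            proof -
              define V where "V = (\<Sum>i<n. (dF i)\<^sup>2) / n * ((\<Sum>i<n. (dG i)\<^sup>2) / n)"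
              have a8: "\<not> \<tau> < \<bar>V / (1 / real n)\<bar>"
                using n8 ws unfolding U8_def V_def dF_def dG_def by simp
              have "V / (1 / real n) = V * n" by simp
              then show ?thesis using a8 abs_ge_self[of "V * n"] unfolding V_def by linarith
            qed
            have htau: "3 * Cw * sqrt \<tau> \<le> m0 / 2 / 2" using Cwp by (simp add: sqtau field_simps)
            have hR01: "\<not> (R 0 = R 1 \<and> R 0 \<noteq> 0)" using n9 ws by (simp add: U9_def R_def)
            have hMb: "M \<le> sqrt n * (m0 / 2 / 2) / sqrt (4 * Cw\<^sup>2 * (K1 + 3 * \<tau>))"
            proof -
              have "(M / \<kappa>)\<^sup>2 \<le> real (nat \<lceil>(M / \<kappa>)\<^sup>2\<rceil>)" by (rule real_nat_ceiling_ge)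
              also have "\<dots> \<le> real n" using nN unfolding N0_def by simp
              finally have "sqrt ((M / \<kappa>)\<^sup>2) \<le> sqrt (real n)" by (rule real_sqrt_le_mono)
              then have "M / \<kappa> \<le> sqrt n" using M kp by simp
              then have "M \<le> sqrt n * \<kappa>" using kp by (simp add: field_simps)
              also have "sqrt n * \<kappa> = sqrt n * (m0 / 2 / 2) / sqrt (4 * Cw\<^sup>2 * (K1 + 3 * \<tau>))"
                unfolding \<kappa>_def by simp
              finally show ?thesis .
            qed
            have "M \<le> Tstat n R"
              by (rule det_lemma[where ep=ep and xx=xx and dF=dF and dG=dG and w=w and R=R,
                    OF nn2 Cwp hw hR _ hS0 hE1 hE2 hE3 hE4 htau _ hR01 hMb]) (use m0p taup in auto)
            moreover have "T n \<omega> = Tstat n R"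
            proof -
              have "(\<lambda>i. (X i \<omega> - fhat n (B \<omega>) (Z i \<omega>)) * (Y i \<omega> - ghat n (B \<omega>) (Z i \<omega>)) * what n (A \<omega>) (Z i \<omega>)) = R"
                by (auto simp: fun_eq_iff R_def Rf_def D_def zc_def)
              then show ?thesis unfolding T_def by simp
            qed
            ultimately show False using notT by simp
          qed
        qed
        have e16: "\<epsilon> / 16 > 0" using eps by simp
        have ev: "eventually (\<lambda>n. measure Q (U1 n) < \<epsilon> / 16 \<and> measure Q (U5 n) < \<epsilon> / 16 \<and>
            measure Q (U7 n) < \<epsilon> / 16 \<and> measure Q (U8 n) < \<epsilon> / 16 \<and> b2 n < \<epsilon> / 16 \<and> n \<ge> N0) sequentially"
          using order_tendstoD(2)[OF L1 e16] order_tendstoD(2)[OF L5 e16] order_tendstoD(2)[OF L7 e16]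
            order_tendstoD(2)[OF L8 e16] order_tendstoD(2)[OF L2' e16] eventually_ge_at_top[of N0]
          by (auto intro!: eventually_conj)
        then show ?thesis
        proof eventually_elim
          case (elim n)
          then have nN: "n \<ge> N0" and np: "n > 0" by (auto simp: N0_def)
          have s89: "measure Q (U8 n \<union> U9 n) \<le> \<epsilon> / 16 + 0"
            apply (rule mUn) using elim L9[of n] by (auto intro: Um)
          have s7: "measure Q (U7 n \<union> (U8 n \<union> U9 n)) \<le> \<epsilon> / 16 + (\<epsilon> / 16 + 0)"
            apply (rule mUn) using elim s89 by (auto simp: Um sets.Un)
          have s6: "measure Q (U6 n \<union> (U7 n \<union> (U8 n \<union> U9 n))) \<le> \<epsilon> / 8 + (\<epsilon> / 16 + (\<epsilon> / 16 + 0))"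
            apply (rule mUn) using L6[OF np] s7 by (auto simp: Um sets.Un)
          have s5: "measure Q (U5 n \<union> (U6 n \<union> (U7 n \<union> (U8 n \<union> U9 n)))) \<le> \<epsilon> / 16 + (\<epsilon> / 8 + (\<epsilon> / 16 + (\<epsilon> / 16 + 0)))"
            apply (rule mUn) using elim s6 by (auto simp: Um sets.Un)
          have s4: "measure Q (U4 n \<union> (U5 n \<union> (U6 n \<union> (U7 n \<union> (U8 n \<union> U9 n))))) \<le> \<epsilon> / 8 + (\<epsilon> / 16 + (\<epsilon> / 8 + (\<epsilon> / 16 + (\<epsilon> / 16 + 0))))"
            apply (rule mUn) using L4[OF np] s5 by (auto simp: Um sets.Un)
          have s3: "measure Q (U3 n \<union> (U4 n \<union> (U5 n \<union> (U6 n \<union> (U7 n \<union> (U8 n \<union> U9 n)))))) \<le> \<epsilon> / 8 + (\<epsilon> / 8 + (\<epsilon> / 16 + (\<epsilon> / 8 + (\<epsilon> / 16 + (\<epsilon> / 16 + 0)))))"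
            apply (rule mUn) using L3[OF np] s4 by (auto simp: Um sets.Un)
          have s2: "measure Q (U2 n \<union> (U3 n \<union> (U4 n \<union> (U5 n \<union> (U6 n \<union> (U7 n \<union> (U8 n \<union> U9 n))))))) \<le> \<epsilon> / 16 + (\<epsilon> / 8 + (\<epsilon> / 8 + (\<epsilon> / 16 + (\<epsilon> / 8 + (\<epsilon> / 16 + (\<epsilon> / 16 + 0))))))"
            apply (rule mUn) using L2[OF np] elim s3 by (auto simp: Um sets.Un)
          have s1: "measure Q (U1 n \<union> (U2 n \<union> (U3 n \<union> (U4 n \<union> (U5 n \<union> (U6 n \<union> (U7 n \<union> (U8 n \<union> U9 n)))))))) \<le> \<epsilon> / 16 + (\<epsilon> / 16 + (\<epsilon> / 8 + (\<epsilon> / 8 + (\<epsilon> / 16 + (\<epsilon> / 8 + (\<epsilon> / 16 + (\<epsilon> / 16 + 0)))))))"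
            apply (rule mUn) using elim s2 by (auto simp: Um sets.Un)
          have "measure Q (bad n) \<le> measure Q (U1 n \<union> (U2 n \<union> (U3 n \<union> (U4 n \<union> (U5 n \<union> (U6 n \<union> (U7 n \<union> (U8 n \<union> U9 n))))))))"
            by (rule Qp.finite_measure_mono[OF incl[OF nN]]) (intro Um sets.Un)
          then show ?case using s1 eps by linarith
        qed
      qed
  qed
  have "(\<lambda>n. 1 - measure Q (bad n)) \<longlonglongrightarrow> 1 - 0"
    by (intro tendsto_intros bad_lim)
  then show "(\<lambda>n. measure Q {\<omega> \<in> space Q. T n \<omega> \<ge> M}) \<longlonglongrightarrow> 1"
    unfolding good by simp
qed

end

theorem corollary1:
  fixes Q :: "'w measure"
    and P :: "(real \<times> real \<times> 'z::euclidean_space) measure"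
    and X Y :: "nat \<Rightarrow> 'w \<Rightarrow> real" and Z :: "nat \<Rightarrow> 'w \<Rightarrow> 'z"
    and SA :: "'a measure" and A :: "'w \<Rightarrow> 'a"
    and SB :: "'b measure" and B :: "'w \<Rightarrow> 'b"
    and what :: "nat \<Rightarrow> 'a \<Rightarrow> 'z \<Rightarrow> real"
    and fhat ghat :: "nat \<Rightarrow> 'b \<Rightarrow> 'z \<Rightarrow> real"
    and fP gP uP vP hP :: "'z \<Rightarrow> real"
  assumes Q: "prob_space Q"
    (* i.i.d. data with distribution P \<in> E_0 *)
    and D_meas: "\<And>i. (\<lambda>\<omega>. (X i \<omega>, Y i \<omega>, Z i \<omega>)) \<in> borel_measurable Q"
    and D_iid: "prob_space.indep_vars Q (\<lambda>_. borel) (\<lambda>i \<omega>. (X i \<omega>, Y i \<omega>, Z i \<omega>)) UNIV"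
    and D_distr: "\<And>i. distr Q borel (\<lambda>\<omega>. (X i \<omega>, Y i \<omega>, Z i \<omega>)) = P"
    and P_E0: "absolutely_continuous lborel P"
    (* f_P, g_P, u_P, v_P and E_P[eps xi | Z = z] *)
    and intX: "integrable P (\<lambda>x. fst x)" and intY: "integrable P (\<lambda>x. fst (snd x))"
    and fP: "is_cond_exp_fun P (\<lambda>x. snd (snd x)) (\<lambda>x. fst x) fP"
    and gP: "is_cond_exp_fun P (\<lambda>x. snd (snd x)) (\<lambda>x. fst (snd x)) gP"
    and uP: "is_nn_cond_exp_fun P (\<lambda>x. snd (snd x)) (\<lambda>x. (fst x - fP (snd (snd x)))\<^sup>2) uP"
    and vP: "is_nn_cond_exp_fun P (\<lambda>x. snd (snd x)) (\<lambda>x. (fst (snd x) - gP (snd (snd x)))\<^sup>2) vP"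
    and hP: "is_cond_exp_fun P (\<lambda>x. snd (snd x))
               (\<lambda>x. (fst x - fP (snd (snd x))) * (fst (snd x) - gP (snd (snd x)))) hP"
    and h_nonzero: "\<not> (AE x in P. hP (snd (snd x)) = 0)"
    (* weights estimated on A, regression functions on an auxiliary data set B;
       data, A and B mutually independent *)
    and A_meas: "A \<in> measurable Q SA" and B_meas: "B \<in> measurable Q SB"
    and indep: "prob_space.indep_sets Q
       (\<lambda>k::nat. if k = 0 then sets (vimage_algebra (space Q)
                      (\<lambda>\<omega> i. (X i \<omega>, Y i \<omega>, Z i \<omega>)) (PiM UNIV (\<lambda>_. borel)))
                 else if k = 1 then sets (vimage_algebra (space Q) A SA)
                 else sets (vimage_algebra (space Q) B SB)) {0, 1, 2}"
    and what_meas: "\<And>n. case_prod (what n) \<in> borel_measurable (SA \<Otimes>\<^sub>M borel)"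
    and fhat_meas: "\<And>n. case_prod (fhat n) \<in> borel_measurable (SB \<Otimes>\<^sub>M borel)"
    and ghat_meas: "\<And>n. case_prod (ghat n) \<in> borel_measurable (SB \<Otimes>\<^sub>M borel)"
    and what_bdd: "\<exists>C>0. \<forall>n a z. \<bar>what n a z\<bar> \<le> C"
    (* rate conditions *)
    and AfAg: "o_P Q
       (\<lambda>n \<omega>. ((\<Sum>i<n. (fP (Z i \<omega>) - fhat n (B \<omega>) (Z i \<omega>))\<^sup>2) / real n) *
               ((\<Sum>i<n. (gP (Z i \<omega>) - ghat n (B \<omega>) (Z i \<omega>))\<^sup>2) / real n))
       (\<lambda>n \<omega>. 1 / real n)"
    and Bf: "o_P Q (\<lambda>n \<omega>. (\<Sum>i<n. (fP (Z i \<omega>) - fhat n (B \<omega>) (Z i \<omega>))\<^sup>2 * vP (Z i \<omega>)) / real n)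
                   (\<lambda>n \<omega>. 1)"
    and Bg: "o_P Q (\<lambda>n \<omega>. (\<Sum>i<n. (gP (Z i \<omega>) - ghat n (B \<omega>) (Z i \<omega>))\<^sup>2 * uP (Z i \<omega>)) / real n)
                   (\<lambda>n \<omega>. 1)"
    and moment: "\<exists>\<eta>>0. (\<integral>\<^sup>+ x. ennreal (\<bar>(fst x - fP (snd (snd x))) * (fst (snd x) - gP (snd (snd x)))\<bar>
                                        powr (2 + \<eta>)) \<partial>P) < \<infinity>"
    (* conditional variance given A, bounded below uniformly in n *)
    and var_lb: "AE \<omega> in Q. \<exists>c>0. \<forall>n. c \<le> prob_space.variance P
                   (\<lambda>x. (fst x - fP (snd (snd x))) * (fst (snd x) - gP (snd (snd x)))
                        * what n (A \<omega>) (snd (snd x)))"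
    (* convergence of the weights to the sign of E[eps xi | Z = z] *)
    and what_lim: "AE \<omega> in Q. AE z in lborel. hP z \<noteq> 0 \<longrightarrow>
                   (\<lambda>n. what n (A \<omega>) z) \<longlonglongrightarrow> sgn (hP z)"
  shows "\<forall>M>0. (\<lambda>n. measure Q {\<omega> \<in> space Q.
            Tstat n (\<lambda>i. (X i \<omega> - fhat n (B \<omega>) (Z i \<omega>)) * (Y i \<omega> - ghat n (B \<omega>) (Z i \<omega>))
                          * what n (A \<omega>) (Z i \<omega>)) \<ge> M}) \<longlonglongrightarrow> 1"
  proof -
  interpret L Q P X Y Z SA A SB B what fhat ghat fP gP uP vP hP
    by (intro L.intro assms)
  show ?thesis by (rule main_result)
qed

end
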